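(* Assume the standing setting and Hypothesis $(H_a)$, and let $\varphi$ be as in Construction (C). Then $\lim_{x\to a^+}\varphi(z_1,x)/\varphi(z_2,x)=1$ for all $z_1,z_2\in\mathbb C$. In particular, $\tau f=\mu f$ is nonoscillatory at $a$ for every $\mu\in\mathbb R$.
   Context: Standing setting: Let $-\infty\le a<b\le\infty$ and let $p,q,r$ be Lebesgue measurable functions on $(a,b)$ with $r>0$ a.e., $r\in L^1_{loc}((a,b))$; $p>0$ a.e., $1/p\in L^1_{loc}((a,b))$; $q$ real-valued a.e., $q\in L^1_{loc}((a,b))$. Let $\tau f=\frac1r\big[-(pf')'+qf\big]$ act on functions $f$ with $f,pf'\in AC_{loc}((a,b))$; write $f^{[1]}=pf'$ and $W(f,g)=fg^{[1]}-f^{[1]}g$. For $\lambda\in\mathbb R$, the equation $\tau f=\lambda f$ is nonoscillatory at $a$ if its nontrivial real solutions have finitely many zeros near $a$; then there is a solution $u_a$, unique up to constant multiples, with $\lim_{x\to a^+}u_a(x)/v_a(x)=0$ for every solution $v_a$ linearly independent of $u_a$; $u_a$ is called principal at $a$ and any such $v_a$ nonprincipal at $a$. Hypothesis $(H_a)$: there exist $\lambda\in\mathbb R$ such that $\tau f=\lambda f$ is nonoscillatory at $a$, and $c\in(a,b)$, such that $\int_a^c|u_a(x)v_a(x)r(x)|\,dx<\infty$, where $u_a$, $v_a$ are principal resp. nonprincipal solutions of $\tau f=\lambda f$ at $a$. Construction (C): fix $\lambda\in\mathbb R$ as in $(H_a)$ and let $u_a$ (principal) and $v_a$ (nonprincipal)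 be solutions of $\tau f=\lambda f$ with $W(v_a,u_a)=1$. Set $\varphi_0=u_a$, $\varphi_n(x)=\int_a^x[u_a(t)v_a(x)-v_a(t)u_a(x)]\varphi_{n-1}(t)r(t)\,dt$ for $n\ge1$, $x\in(a,b)$, and $\varphi(z,x)=\sum_{n\ge0}\varphi_n(x)(z-\lambda)^n$; this series converges for all $z\in\mathbb C$, $x\in(a,b)$, is entire in $z$ and solves $\tau\varphi(z,\cdot)=z\varphi(z,\cdot)$. *)

theory Defs
  imports "HOL-Analysis.Analysis"
begin

definition ivl :: "ereal \<Rightarrow> ereal \<Rightarrow> real set" where
  "ivl a b = {x. a < ereal x \<and> ereal x < b}"

definition left_end_filter :: "ereal \<Rightarrow> real filter" where
  "left_end_filter a = (if a = -\<infinity> then at_bot else at_right (real_of_ereal a))"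

definition abs_cont_on :: "real \<Rightarrow> real \<Rightarrow> (real \<Rightarrow> 'a::real_normed_vector) \<Rightarrow> bool" where
  "abs_cont_on c d f \<longleftrightarrow>
     (\<forall>\<epsilon>>0. \<exists>\<delta>>0. \<forall>(n::nat) (s::nat \<Rightarrow> real) (t::nat \<Rightarrow> real).
        (\<forall>k<n. c \<le> s k \<and> s k \<le> t k \<and> t k \<le> d) \<and>
        (\<forall>j<n. \<forall>k<n. j \<noteq> k \<longrightarrow> t j \<le> s k \<or> t k \<le> s j) \<and>
        (\<Sum>k<n. t k - s k) < \<delta>
        \<longrightarrow> (\<Sum>k<n. norm (f (t k) - f (s k))) < \<epsilon>)"

definition AC_loc :: "real set \<Rightarrow> (real \<Rightarrow> 'a::real_normed_vector) \<Rightarrow> bool" where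
  "AC_loc I f \<longleftrightarrow> (\<forall>c d. c \<in> I \<and> d \<in> I \<and> c \<le> d \<longrightarrow> abs_cont_on c d f)"

definition L1_loc :: "real set \<Rightarrow> (real \<Rightarrow> real) \<Rightarrow> bool" where
  "L1_loc I g \<longleftrightarrow> (\<forall>c d. c \<in> I \<and> d \<in> I \<and> c \<le> d \<longrightarrow> set_integrable lebesgue {c..d} g)"

definition SL_coeffs :: "ereal \<Rightarrow> ereal \<Rightarrow> (real \<Rightarrow> real) \<Rightarrow> (real \<Rightarrow> real) \<Rightarrow> (real \<Rightarrow> real) \<Rightarrow> bool" where
  "SL_coeffs a b p q r \<longleftrightarrow>
     a < b \<and>
     set_borel_measurable lebesgue (ivl a b) p \<and>
     set_borel_measurable lebesgue (ivl a b) q \<and>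
     set_borel_measurable lebesgue (ivl a b) r \<and>
     (AE x in lebesgue. x \<in> ivl a b \<longrightarrow> r x > 0) \<and> L1_loc (ivl a b) r \<and>
     (AE x in lebesgue. x \<in> ivl a b \<longrightarrow> p x > 0) \<and> L1_loc (ivl a b) (\<lambda>x. 1 / p x) \<and>
     L1_loc (ivl a b) q"

text \<open>f is a solution of tau f = z f on (a,b), with quasi-derivative f1 = p f'.
  Both f and f1 are locally absolutely continuous, f' = f1/p a.e. and
  f1' = (q - z r) f a.e. (i.e. -(p f')' + q f = z r f).  The scalar field is generic
  so that it covers real solutions (real) and complex solutions (complex).\<close>
definition is_sol :: "ereal \<Rightarrow> ereal \<Rightarrow> (real \<Rightarrow> real) \<Rightarrow> (real \<Rightarrow> real) \<Rightarrow> (real \<Rightarrow> real)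
    \<Rightarrow> 'a::real_normed_field \<Rightarrow> (real \<Rightarrow> 'a) \<Rightarrow> (real \<Rightarrow> 'a) \<Rightarrow> bool" where
  "is_sol a b p q r z f f1 \<longleftrightarrow>
     AC_loc (ivl a b) f \<and> AC_loc (ivl a b) f1 \<and>
     (AE x in lebesgue. x \<in> ivl a b \<longrightarrow> (f has_vector_derivative (f1 x / of_real (p x))) (at x)) \<and>
     (AE x in lebesgue. x \<in> ivl a b \<longrightarrow>
        (f1 has_vector_derivative ((of_real (q x) - z * of_real (r x)) * f x)) (at x))"

definition nonosc_at_a :: "ereal \<Rightarrow> ereal \<Rightarrow> (real \<Rightarrow> real) \<Rightarrow> (real \<Rightarrow> real) \<Rightarrow> (real \<Rightarrow> real)
    \<Rightarrow> real \<Rightarrow> bool" where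
  "nonosc_at_a a b p q r lam \<longleftrightarrow>
     (\<forall>f f1. is_sol a b p q r lam f f1 \<and> (\<exists>x\<in>ivl a b. f x \<noteq> 0) \<longrightarrow>
        (\<exists>c\<in>ivl a b. finite {x. a < ereal x \<and> x < c \<and> f x = 0}))"

definition lin_indep_on :: "real set \<Rightarrow> (real \<Rightarrow> real) \<Rightarrow> (real \<Rightarrow> real) \<Rightarrow> bool" where
  "lin_indep_on I u v \<longleftrightarrow>
     (\<forall>\<alpha> \<beta>. (\<forall>x\<in>I. \<alpha> * u x + \<beta> * v x = 0) \<longrightarrow> \<alpha> = 0 \<and> \<beta> = 0)"

definition principal_at_a :: "ereal \<Rightarrow> ereal \<Rightarrow> (real \<Rightarrow> real) \<Rightarrow> (real \<Rightarrow> real) \<Rightarrow> (real \<Rightarrow> real)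
    \<Rightarrow> real \<Rightarrow> (real \<Rightarrow> real) \<Rightarrow> bool" where
  "principal_at_a a b p q r lam u \<longleftrightarrow>
     (\<exists>u1. is_sol a b p q r lam u u1) \<and>
     (\<forall>v v1. is_sol a b p q r lam v v1 \<and> lin_indep_on (ivl a b) u v \<longrightarrow>
        ((\<lambda>x. u x / v x) \<longlongrightarrow> 0) (left_end_filter a))"

primrec phi_n :: "ereal \<Rightarrow> (real \<Rightarrow> real) \<Rightarrow> (real \<Rightarrow> real) \<Rightarrow> (real \<Rightarrow> real)
    \<Rightarrow> nat \<Rightarrow> real \<Rightarrow> real" where
  "phi_n a u v r 0 = u"
| "phi_n a u v r (Suc n) = (\<lambda>x. LINT t:{t. a < ereal t \<and> t < x}|lebesgue.
        (u t * v x - v t * u x) * phi_n a u v r n t * r t)"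

definition phi :: "ereal \<Rightarrow> (real \<Rightarrow> real) \<Rightarrow> (real \<Rightarrow> real) \<Rightarrow> (real \<Rightarrow> real) \<Rightarrow> real
    \<Rightarrow> complex \<Rightarrow> real \<Rightarrow> complex" where
  "phi a u v r lam z x = (\<Sum>n. complex_of_real (phi_n a u v r n x) * (z - complex_of_real lam) ^ n)"

end

theory Submission
  imports Defs
begin

lemma neg_open:
  assumes "negligible N" "e > 0"
  shows "\<exists>G. open G \<and> N \<subseteq> G \<and> G \<in> lmeasurable \<and> measure lebesgue G < e"
proof -
  have Ns: "N \<in> sets lebesgue" using assms(1) negligible_imp_sets by blast
  obtain T where T: "open T" "N \<subseteq> T" "(T - N) \<in> lmeasurable" "emeasure lebesgue (T - N) < ennreal e"
    using sets_lebesgue_outer_open[OF Ns assms(2)] by blast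
  have NL: "N \<in> lmeasurable" using assms(1) negligible_imp_measurable by blast
  have eq: "T = (T - N) \<union> N" using T by blast
  have TL: "T \<in> lmeasurable" using T(3) NL by (subst eq) (rule fmeasurable.Un)
  have "measure lebesgue T \<le> measure lebesgue (T - N) + measure lebesgue N"
    by (subst eq) (rule measure_Un_le; use T NL in auto)
  also have "measure lebesgue N = 0" using assms(1) negligible_imp_measure0 by blast
  also have "measure lebesgue (T - N) < e"
    using T(3,4) assms(2) by (simp add: emeasure_eq_measure2 ennreal_less_iff)
  finally show ?thesis using T TL by auto
qed

lemma deriv_local:
  fixes F :: "real \<Rightarrow> real"
  assumes "(F has_real_derivative D) (at x)" "e > 0"
  shows "\<exists>r>0. \<forall>y. \<bar>y - x\<bar> < r \<longrightarrow> \<bar>F y - F x - D*(y-x)\<bar> \<le> e*\<bar>y-x\<bar>"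
proof -
  have "(F has_derivative (\<lambda>h. D * h)) (at x within UNIV)"
    using assms(1) by (simp add: has_field_derivative_def)
  then obtain d where "d > 0" "\<forall>y\<in>UNIV. norm (y - x) < d \<longrightarrow> norm (F y - F x - D * (y - x)) \<le> e * norm (y - x)"
    using assms(2) unfolding has_derivative_within_alt by blast
  then show ?thesis by (auto simp: mult.commute)
qed

lemma tdiv_elem:
  fixes c d :: real
  assumes "p tagged_division_of {c..d}" "(x,K) \<in> p"
  shows "K = {Inf K..Sup K} \<and> Inf K \<le> x \<and> x \<le> Sup K \<and> c \<le> Inf K \<and> Sup K \<le> d"
proof -
  obtain a b where K: "K = cbox a b" using tagged_division_ofD(4)[OF assms] by blast
  have xK: "x \<in> K" using tagged_division_ofD(2)[OF assms] .
  have Ks: "K \<subseteq> {c..d}" using tagged_division_ofD(3)[OF assms] .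
  from K xK have ab: "a \<le> b" "K = {a..b}" by auto
  then have "Inf K = a" "Sup K = b" by auto
  then show ?thesis using ab xK Ks by auto
qed

lemma disj_int_order:
  fixes s1 t1 s2 t2 :: real
  assumes "s1 < t1" "s2 < t2" "{s1<..<t1} \<inter> {s2<..<t2} = {}"
  shows "t1 \<le> s2 \<or> t2 \<le> s1"
proof (rule ccontr)
  assume "\<not> (t1 \<le> s2 \<or> t2 \<le> s1)"
  then have "(max s1 s2 + min t1 t2)/2 \<in> {s1<..<t1} \<inter> {s2<..<t2}" using assms(1,2) by auto
  then show False using assms(3) by blast
qed

lemma AC_sum_small:
  fixes F :: "real \<Rightarrow> real"
  assumes acd: "\<forall>(n::nat) (s::nat \<Rightarrow> real) (t::nat \<Rightarrow> real).
        (\<forall>k<n. c \<le> s k \<and> s k \<le> t k \<and> t k \<le> d) \<and>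
        (\<forall>j<n. \<forall>k<n. j \<noteq> k \<longrightarrow> t j \<le> s k \<or> t k \<le> s j) \<and>
        (\<Sum>k<n. t k - s k) < \<delta>
        \<longrightarrow> (\<Sum>k<n. norm (F (t k) - F (s k))) < e"
    and p: "p tagged_division_of {c..d}" and qp: "q \<subseteq> p" and qG: "\<forall>(x,K)\<in>q. K \<subseteq> G"
    and G: "G \<in> lmeasurable" "measure lebesgue G < \<delta>"
  shows "\<bar>\<Sum>(x,K)\<in>q. F (Sup K) - F (Inf K)\<bar> \<le> e"
proof -
  define q' where "q' = {(x,K)\<in>q. Inf K < Sup K}"
  have fp: "finite p" using p by blast
  have fq: "finite q" using fp qp finite_subset by blast
  have fq': "finite q'" unfolding q'_def using fq by (simp add: case_prod_unfold)
  have q'q: "q' \<subseteq> q" unfolding q'_def by auto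
  have el: "\<And>x K. (x,K) \<in> q \<Longrightarrow> K = {Inf K..Sup K} \<and> Inf K \<le> Sup K \<and> c \<le> Inf K \<and> Sup K \<le> d"
    using tdiv_elem[OF p] qp by fastforce
  have "(\<Sum>(x,K)\<in>q. F (Sup K) - F (Inf K)) = (\<Sum>(x,K)\<in>q'. F (Sup K) - F (Inf K))"
  proof (rule sum.mono_neutral_right[OF fq q'q])
    show "\<forall>i\<in>q - q'. (case i of (x, K) \<Rightarrow> F (Sup K) - F (Inf K)) = 0"
    proof
      fix i assume i: "i \<in> q - q'"
      obtain x K where iK: "i = (x,K)" by fastforce
      have "Inf K = Sup K" using i el[of x K] unfolding iK q'_def by auto
      then show "(case i of (x, K) \<Rightarrow> F (Sup K) - F (Inf K)) = 0" using iK by simp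
    qed
  qed
  also have "\<bar>\<dots>\<bar> \<le> (\<Sum>(x,K)\<in>q'. \<bar>F (Sup K) - F (Inf K)\<bar>)"
    by (rule order_trans[OF sum_abs]) (simp add: case_prod_unfold)
  also have "\<dots> \<le> e"
  proof -
    define n where "n = card q'"
    obtain h where h: "bij_betw h {0..<n} q'" using ex_bij_betw_nat_finite[OF fq'] n_def by blast
    define s where "s k = Inf (snd (h k))" for k
    define t where "t k = Sup (snd (h k))" for k
    have hq: "\<And>k. k < n \<Longrightarrow> h k \<in> q'" using h by (auto simp: bij_betw_def)
    have hq2: "\<And>k. k < n \<Longrightarrow> (fst (h k), snd (h k)) \<in> q'" using hq by simp
    have st: "\<And>k. k < n \<Longrightarrow> snd (h k) = {s k..t k} \<and> s k < t k \<and> c \<le> s k \<and> t k \<le> d"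
    proof -
      fix k assume k: "k < n"
      have "(fst (h k), snd (h k)) \<in> q" using hq2[OF k] q'q by blast
      moreover have "Inf (snd (h k)) < Sup (snd (h k))" using hq2[OF k] unfolding q'_def by auto
      ultimately show "snd (h k) = {s k..t k} \<and> s k < t k \<and> c \<le> s k \<and> t k \<le> d"
        using el[of "fst (h k)" "snd (h k)"] unfolding s_def t_def by auto
    qed
    have c1: "\<forall>k<n. c \<le> s k \<and> s k \<le> t k \<and> t k \<le> d" using st by fastforce
    have c2: "\<forall>j<n. \<forall>k<n. j \<noteq> k \<longrightarrow> t j \<le> s k \<or> t k \<le> s j"
    proof (intro allI impI)
      fix j k assume jk: "j < n" "k < n" "j \<noteq> k"
      then have "h j \<noteq> h k" using h by (auto simp: bij_betw_def inj_on_def)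
      then have "(fst (h j), snd (h j)) \<noteq> (fst (h k), snd (h k))" by simp
      moreover have "(fst (h j), snd (h j)) \<in> p" "(fst (h k), snd (h k)) \<in> p"
        using hq2 jk q'q qp by blast+
      ultimately have "interior (snd (h j)) \<inter> interior (snd (h k)) = {}"
        using tagged_division_ofD(5)[OF p] by blast
      then have "{s j<..<t j} \<inter> {s k<..<t k} = {}" using st[OF jk(1)] st[OF jk(2)]
        by (metis interior_atLeastAtMost_real)
      then show "t j \<le> s k \<or> t k \<le> s j" using disj_int_order st jk by blast
    qed
    have sumeq: "(\<Sum>k<n. t k - s k) = (\<Sum>(x,K)\<in>q'. measure lebesgue K)"
    proof -
      have "(\<Sum>k<n. t k - s k) = (\<Sum>k\<in>{0..<n}. (\<lambda>(x,K). measure lebesgue K) (h k))"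
      proof -
        have eqk: "\<And>k. k < n \<Longrightarrow> t k - s k = (\<lambda>(x,K). measure lebesgue K) (h k)"
        proof -
          fix k assume "k < n"
          then have "snd (h k) = {s k..t k}" "s k < t k" using st by auto
          then show "t k - s k = (\<lambda>(x,K). measure lebesgue K) (h k)" by (simp add: case_prod_unfold)
        qed
        then show ?thesis by (auto simp: lessThan_atLeast0 intro!: sum.cong)
      qed
      also have "\<dots> = (\<Sum>(x,K)\<in>q'. measure lebesgue K)"
        by (rule sum.reindex_bij_betw[OF h])
      finally show ?thesis .
    qed
    have "(\<Sum>(x,K)\<in>q'. measure lebesgue K) = measure lebesgue (\<Union> (snd ` q'))"
    proof -
      have "measure lebesgue (\<Union> (snd ` q')) = (\<Sum>i\<in>q'. measure lebesgue (snd i))"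
      proof (rule measure_negligible_finite_Union_image[OF fq'])
        show "\<And>i. i \<in> q' \<Longrightarrow> snd i \<in> lmeasurable"
        proof -
          fix i assume i: "i \<in> q'"
          obtain x K where iK: "i = (x,K)" by fastforce
          have "K = {Inf K..Sup K}" using el[of x K] i q'q iK by blast
          then have "K \<in> lmeasurable" by (metis lmeasurable_cbox cbox_interval)
          then show "snd i \<in> lmeasurable" using iK by simp
        qed
        show "pairwise (\<lambda>i j. negligible (snd i \<inter> snd j)) q'"
        unfolding pairwise_def
        proof (intro ballI impI)
          fix i j assume ij: "i \<in> q'" "j \<in> q'" "i \<noteq> j"
          obtain x K where iK: "i = (x,K)" by fastforce
          obtain y L where jL: "j = (y,L)" by fastforce
          have a: "(x,K) \<in> q'" "(y,L) \<in> q'" "(x,K) \<noteq> (y,L)" using ij iK jL by auto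
          have "(x,K) \<in> p" "(y,L) \<in> p" using a q'q qp by blast+
          then have ii: "interior K \<inter> interior L = {}" using tagged_division_ofD(5)[OF p] a(3) by blast
          have eK: "K = {Inf K..Sup K}" "Inf K < Sup K" using a(1) el q'q unfolding q'_def by auto
          have eL: "L = {Inf L..Sup L}" "Inf L < Sup L" using a(2) el q'q unfolding q'_def by auto
          have "{Inf K<..<Sup K} \<inter> {Inf L<..<Sup L} = {}" using ii eK eL
            by (metis interior_atLeastAtMost_real)
          then have "Sup K \<le> Inf L \<or> Sup L \<le> Inf K" using disj_int_order eK eL by blast
          have "K \<inter> L \<subseteq> {Sup K, Sup L}"
          proof
            fix z assume z: "z \<in> K \<inter> L"
            then have "Inf K \<le> z" "z \<le> Sup K" "Inf L \<le> z" "z \<le> Sup L"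
              using eK(1) eL(1) by (metis Int_iff atLeastAtMost_iff)+
            then show "z \<in> {Sup K, Sup L}" using \<open>Sup K \<le> Inf L \<or> Sup L \<le> Inf K\<close> by auto
          qed
          moreover have "negligible {Sup K, Sup L}" by (rule negligible_finite) simp
          ultimately have "negligible (K \<inter> L)" by (metis negligible_subset)
          then show "negligible (snd i \<inter> snd j)" using iK jL by simp
        qed
      qed
      then show ?thesis by (simp add: case_prod_unfold)
    qed
    also have "\<dots> \<le> measure lebesgue G"
    proof (rule measure_mono_fmeasurable[OF _ _ G(1)])
      show "\<Union> (snd ` q') \<subseteq> G" using qG q'q by fastforce
      show "\<Union> (snd ` q') \<in> sets lebesgue"
      proof (rule sets.finite_Union)
        show "finite (snd ` q')" using fq' by simp
        show "snd ` q' \<subseteq> sets lebesgue"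
        proof
          fix K assume "K \<in> snd ` q'"
          then obtain x where "(x,K) \<in> q'" by force
          then have "K = {Inf K..Sup K}" using el q'q by blast
          then show "K \<in> sets lebesgue" by (metis lmeasurable_cbox cbox_interval fmeasurableD)
        qed
      qed
    qed
    finally have c3: "(\<Sum>k<n. t k - s k) < \<delta>" using sumeq G(2) by linarith
    have "(\<Sum>k<n. norm (F (t k) - F (s k))) < e" using acd c1 c2 c3 by blast
    moreover have "(\<Sum>k<n. norm (F (t k) - F (s k))) = (\<Sum>(x,K)\<in>q'. \<bar>F (Sup K) - F (Inf K)\<bar>)"
    proof -
      have "(\<Sum>k<n. norm (F (t k) - F (s k))) = (\<Sum>k\<in>{0..<n}. (\<lambda>(x,K). \<bar>F (Sup K) - F (Inf K)\<bar>) (h k))"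
        unfolding s_def t_def by (intro sum.cong) (auto simp: case_prod_unfold)
      also have "\<dots> = (\<Sum>(x,K)\<in>q'. \<bar>F (Sup K) - F (Inf K)\<bar>)"
        by (rule sum.reindex_bij_betw[OF h])
      finally show ?thesis .
    qed
    ultimately show ?thesis by linarith
  qed
  finally show ?thesis .
qed

lemma zero_if_small:
  fixes z K :: real
  assumes "K > 0" "\<And>e. e > 0 \<Longrightarrow> \<bar>z\<bar> \<le> e * K"
  shows "z = 0"
proof (rule ccontr)
  assume "z \<noteq> 0"
  then have "\<bar>z\<bar> > 0" by simp
  have "\<bar>z\<bar> \<le> (\<bar>z\<bar> / (2*K)) * K" using assms(2)[of "\<bar>z\<bar> / (2*K)"] \<open>\<bar>z\<bar> > 0\<close> assms(1) by simp
  then show False using \<open>\<bar>z\<bar> > 0\<close> assms(1) by (simp add: field_simps)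
qed

lemma FTC_AC:
  fixes F g :: "real \<Rightarrow> real"
  assumes cd: "c \<le> d" and ac: "abs_cont_on c d F"
    and gi: "g integrable_on {c..d}"
    and der: "AE x in lebesgue. x \<in> {c..d} \<longrightarrow> (F has_real_derivative g x) (at x)"
  shows "(g has_integral (F d - F c)) {c..d}"
proof -
  obtain N where NN: "N \<in> null_sets lebesgue"
    and HN: "\<And>x. x \<in> space lebesgue - N \<Longrightarrow> x \<in> {c..d} \<longrightarrow> (F has_real_derivative g x) (at x)"
    using AE_E3[OF der] by blast
  have negN: "negligible N" using NN negligible_iff_null_sets by blast
  have dN: "\<And>x. x \<notin> N \<Longrightarrow> x \<in> {c..d} \<Longrightarrow> (F has_real_derivative g x) (at x)" using HN by auto
  define g0 where "g0 x = (if x \<in> N then 0 else g x)" for x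
  obtain J where J: "(g has_integral J) {c..d}" using gi by blast
  have J0: "(g0 has_integral J) {c..d}"
    by (rule has_integral_spike[OF negN _ J]) (simp add: g0_def)
  have main: "\<bar>(F d - F c) - J\<bar> \<le> e * (d - c + 2)" if e: "e > 0" for e
  proof -
    obtain \<delta> where \<delta>: "\<delta> > 0" and acd: "\<forall>(n::nat) (s::nat \<Rightarrow> real) (t::nat \<Rightarrow> real).
        (\<forall>k<n. c \<le> s k \<and> s k \<le> t k \<and> t k \<le> d) \<and>
        (\<forall>j<n. \<forall>k<n. j \<noteq> k \<longrightarrow> t j \<le> s k \<or> t k \<le> s j) \<and>
        (\<Sum>k<n. t k - s k) < \<delta>
        \<longrightarrow> (\<Sum>k<n. norm (F (t k) - F (s k))) < e"
      using ac e unfolding abs_cont_on_def by blast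
    obtain G where G: "open G" "N \<subseteq> G" "G \<in> lmeasurable" "measure lebesgue G < \<delta>"
      using neg_open[OF negN \<delta>] by blast
    obtain \<gamma>1 where \<gamma>1: "gauge \<gamma>1" "\<And>\<D>. \<D> tagged_division_of {c..d} \<and> \<gamma>1 fine \<D> \<Longrightarrow>
        norm ((\<Sum>(x, k)\<in>\<D>. Henstock_Kurzweil_Integration.content k *\<^sub>R g0 x) - J) < e"
      using J0 e unfolding has_integral_real by meson
    define R where "R x = (SOME r. r > 0 \<and> (\<forall>y. \<bar>y - x\<bar> < r \<longrightarrow> \<bar>F y - F x - g x*(y-x)\<bar> \<le> e*\<bar>y-x\<bar>))" for x
    have R: "R x > 0 \<and> (\<forall>y. \<bar>y - x\<bar> < R x \<longrightarrow> \<bar>F y - F x - g x*(y-x)\<bar> \<le> e*\<bar>y-x\<bar>)"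
      if "x \<notin> N" "x \<in> {c..d}" for x
      unfolding R_def by (rule someI_ex) (rule deriv_local[OF dN[OF that] e])
    define \<gamma>2 where "\<gamma>2 x = (if x \<in> N then G else if x \<in> {c..d} then ball x (R x) else UNIV)" for x
    have g2: "gauge \<gamma>2" unfolding gauge_def \<gamma>2_def using G(1,2) R by auto
    have g12: "gauge (\<lambda>x. \<gamma>1 x \<inter> \<gamma>2 x)" using gauge_Int[OF \<gamma>1(1) g2] .
    obtain p where p: "p tagged_division_of {c..d}" and fine: "(\<lambda>x. \<gamma>1 x \<inter> \<gamma>2 x) fine p"
      using fine_division_exists_real[OF g12] by blast
    have fine1: "\<gamma>1 fine p" and fine2: "\<gamma>2 fine p" using fine fine_Int by blast+
    have fp: "finite p" using p by blast
    define p1 where "p1 = {(x,K)\<in>p. x \<notin> N}"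
    define p2 where "p2 = {(x,K)\<in>p. x \<in> N}"
    have p12: "p = p1 \<union> p2" "p1 \<inter> p2 = {}" unfolding p1_def p2_def by auto
    have fp1: "finite p1" "finite p2" using fp p12(1) by auto
    have el: "\<And>x K. (x,K) \<in> p \<Longrightarrow> K = {Inf K..Sup K} \<and> Inf K \<le> x \<and> x \<le> Sup K \<and> c \<le> Inf K \<and> Sup K \<le> d"
      using tdiv_elem[OF p] by blast
    let ?D = "\<lambda>(x::real,K::real set). F (Sup K) - F (Inf K)"
    let ?S = "\<lambda>(x::real,K::real set). Henstock_Kurzweil_Integration.content K * g0 x"
    have E1: "(\<Sum>i\<in>p. ?D i) = F d - F c"
      using additive_tagged_division_1[OF cd p, of F] by (simp add: case_prod_unfold)
    have E2: "\<bar>(\<Sum>i\<in>p. ?S i) - J\<bar> < e" using \<gamma>1(2)[of p] p fine1 by (simp add: case_prod_unfold)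
    have S2: "(\<Sum>i\<in>p. ?S i) = (\<Sum>i\<in>p1. ?S i)"
    proof -
      have "(\<Sum>i\<in>p. ?S i) = (\<Sum>i\<in>p1. ?S i) + (\<Sum>i\<in>p2. ?S i)"
        using p12 fp1 by (simp add: sum.union_disjoint)
      moreover have "(\<Sum>i\<in>p2. ?S i) = 0"
        by (rule sum.neutral) (auto simp: p2_def g0_def)
      ultimately show ?thesis by simp
    qed
    have D12: "(\<Sum>i\<in>p. ?D i) = (\<Sum>i\<in>p1. ?D i) + (\<Sum>i\<in>p2. ?D i)"
      using p12 fp1 by (simp add: sum.union_disjoint)
    have B2: "\<bar>\<Sum>i\<in>p2. ?D i\<bar> \<le> e"
    proof -
      have "\<forall>(x,K)\<in>p2. K \<subseteq> G"
      proof (clarify)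
        fix x K z assume "(x,K) \<in> p2" "z \<in> K"
        then have "(x,K) \<in> p" "x \<in> N" unfolding p2_def by auto
        then have "K \<subseteq> \<gamma>2 x" using fine2 unfolding fine_def by blast
        then show "z \<in> G" using \<open>z \<in> K\<close> \<open>x \<in> N\<close> unfolding \<gamma>2_def by auto
      qed
      then show ?thesis using AC_sum_small[OF acd p _ _ G(3,4), of p2] p2_def
        by (auto simp: case_prod_unfold)
    qed
    have B1: "\<bar>(\<Sum>i\<in>p1. ?D i) - (\<Sum>i\<in>p1. ?S i)\<bar> \<le> e * (d - c)"
    proof -
      have "\<bar>(\<Sum>i\<in>p1. ?D i) - (\<Sum>i\<in>p1. ?S i)\<bar> = \<bar>\<Sum>i\<in>p1. ?D i - ?S i\<bar>"
        by (simp add: sum_subtractf case_prod_unfold)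
      also have "\<dots> \<le> (\<Sum>i\<in>p1. \<bar>?D i - ?S i\<bar>)" by (rule sum_abs)
      also have "\<dots> \<le> (\<Sum>i\<in>p1. e * Henstock_Kurzweil_Integration.content (snd i))"
      proof (rule sum_mono)
        fix i assume i: "i \<in> p1"
        obtain x K where iK: "i = (x,K)" by fastforce
        have xK: "(x,K) \<in> p" "x \<notin> N" using i iK unfolding p1_def by auto
        have e1: "K = {Inf K..Sup K}" "Inf K \<le> x" "x \<le> Sup K" "c \<le> Inf K" "Sup K \<le> d"
          using el[OF xK(1)] by auto
        have xcd: "x \<in> {c..d}" using e1 by auto
        have "K \<subseteq> \<gamma>2 x" using fine2 xK(1) unfolding fine_def by blast
        then have Kb: "K \<subseteq> ball x (R x)" using xK(2) xcd unfolding \<gamma>2_def by simp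
        have uK: "Inf K \<in> K" "Sup K \<in> K" using e1 by (metis atLeastAtMost_iff order_refl order_trans)+
        have du: "\<bar>Inf K - x\<bar> < R x" "\<bar>Sup K - x\<bar> < R x"
          using Kb uK by (auto simp: dist_real_def dist_commute)
        have r1: "\<bar>F (Sup K) - F x - g x*(Sup K - x)\<bar> \<le> e*\<bar>Sup K - x\<bar>" using R[OF xK(2) xcd] du by blast
        have r2: "\<bar>F (Inf K) - F x - g x*(Inf K - x)\<bar> \<le> e*\<bar>Inf K - x\<bar>" using R[OF xK(2) xcd] du by blast
        have cK: "Henstock_Kurzweil_Integration.content K = Sup K - Inf K" using e1 by (metis content_real order_trans)
        have "\<bar>?D i - ?S i\<bar> = \<bar>(F (Sup K) - F x - g x*(Sup K - x)) - (F (Inf K) - F x - g x*(Inf K - x))\<bar>"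
        proof -
          have "Henstock_Kurzweil_Integration.content K * g0 x = (Sup K - Inf K) * g x"
            using cK xK(2) by (simp add: g0_def)
          then show ?thesis using iK by (simp add: algebra_simps)
        qed
        also have "\<dots> \<le> e*\<bar>Sup K - x\<bar> + e*\<bar>Inf K - x\<bar>" using r1 r2 by linarith
        also have "\<dots> = e * Henstock_Kurzweil_Integration.content (snd i)"
        proof -
          have "\<bar>Sup K - x\<bar> + \<bar>Inf K - x\<bar> = Henstock_Kurzweil_Integration.content K" using cK e1 by simp
          then show ?thesis using iK by (simp add: distrib_left[symmetric])
        qed
        finally show "\<bar>?D i - ?S i\<bar> \<le> e * Henstock_Kurzweil_Integration.content (snd i)" .
      qed
      also have "\<dots> = e * (\<Sum>i\<in>p1. Henstock_Kurzweil_Integration.content (snd i))" by (simp add: sum_distrib_left)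
      also have "\<dots> \<le> e * (d - c)"
      proof -
        have "(\<Sum>i\<in>p1. Henstock_Kurzweil_Integration.content (snd i)) \<le> (\<Sum>i\<in>p. Henstock_Kurzweil_Integration.content (snd i))"
          using p12 fp1 by (intro sum_mono2) auto
        also have "\<dots> = Henstock_Kurzweil_Integration.content (cbox c d)"
          using additive_content_tagged_division[of p c d] p by (simp add: case_prod_unfold)
        also have "\<dots> = d - c" using cd by simp
        finally show ?thesis using e by (simp add: mult_left_mono)
      qed
      finally show ?thesis .
    qed
    have "(F d - F c) - J = ((\<Sum>i\<in>p1. ?D i) - (\<Sum>i\<in>p1. ?S i)) + (\<Sum>i\<in>p2. ?D i) + ((\<Sum>i\<in>p. ?S i) - J)"
      using E1 D12 S2 by simp
    then have "\<bar>(F d - F c) - J\<bar> \<le> e * (d - c) + e + e" using B1 B2 E2 by linarith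
    then show ?thesis by (simp add: algebra_simps)
  qed
  have "(F d - F c) - J = 0"
    by (rule zero_if_small[of "d - c + 2"]) (use cd main in auto)
  then show ?thesis using J by simp
qed


lemma ivl_between:
  assumes "x \<in> ivl a b"
  shows "\<exists>c d. c \<in> ivl a b \<and> d \<in> ivl a b \<and> c < x \<and> x < d"
proof -
  have ax: "a < ereal x" and xb: "ereal x < b" using assms unfolding ivl_def by auto
  obtain c where c: "a < ereal c" "ereal c < ereal x" using ereal_dense2[OF ax] by blast
  obtain d where d: "ereal x < ereal d" "ereal d < b" using ereal_dense2[OF xb] by blast
  have "ereal c < b" using c(2) xb by (rule less_trans)
  moreover have "a < ereal d" using ax d(1) by (rule less_trans)
  ultimately have "c \<in> ivl a b" "d \<in> ivl a b" using c d unfolding ivl_def by auto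
  moreover have "c < x" "x < d" using c d by auto
  ultimately show ?thesis by blast
qed

lemma ivl_convex:
  assumes "c \<in> ivl a b" "d \<in> ivl a b" "c \<le> x" "x \<le> d"
  shows "x \<in> ivl a b"
proof -
  have 1: "a < ereal c" "ereal d < b" using assms unfolding ivl_def by auto
  have 2: "ereal c \<le> ereal x" "ereal x \<le> ereal d" using assms by auto
  have "a < ereal x" using less_le_trans[OF 1(1) 2(1)] .
  moreover have "ereal x < b" using le_less_trans[OF 2(2) 1(2)] .
  ultimately show ?thesis unfolding ivl_def by simp
qed

lemma ivl_sub: "c \<in> ivl a b \<Longrightarrow> d \<in> ivl a b \<Longrightarrow> {c..d} \<subseteq> ivl a b"
proof
  fix x assume "c \<in> ivl a b" "d \<in> ivl a b" "x \<in> {c..d}"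
  then show "x \<in> ivl a b" using ivl_convex[of c a b d x] by simp
qed

lemma AC_cont:
  fixes f :: "real \<Rightarrow> real"
  assumes "abs_cont_on c d f"
  shows "continuous_on {c..d} f"
  unfolding continuous_on_iff
proof (intro ballI allI impI)
  fix x e :: real assume x: "x \<in> {c..d}" and e: "e > 0"
  obtain \<delta> where \<delta>: "\<delta> > 0" and H: "\<forall>(n::nat) (s::nat \<Rightarrow> real) (t::nat \<Rightarrow> real).
        (\<forall>k<n. c \<le> s k \<and> s k \<le> t k \<and> t k \<le> d) \<and>
        (\<forall>j<n. \<forall>k<n. j \<noteq> k \<longrightarrow> t j \<le> s k \<or> t k \<le> s j) \<and>
        (\<Sum>k<n. t k - s k) < \<delta>
        \<longrightarrow> (\<Sum>k<n. norm (f (t k) - f (s k))) < e"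
    using assms e unfolding abs_cont_on_def by blast
  show "\<exists>d'>0. \<forall>x'\<in>{c..d}. dist x' x < d' \<longrightarrow> dist (f x') (f x) < e"
  proof (intro exI[of _ \<delta>] conjI ballI impI \<delta>)
    fix y assume y: "y \<in> {c..d}" "dist y x < \<delta>"
    have "(\<Sum>k<1::nat. norm (f ((\<lambda>_. max x y) k) - f ((\<lambda>_. min x y) k))) < e"
    proof -
      have "max x y - min x y = \<bar>y - x\<bar>" by (auto simp: max_def min_def)
      then show ?thesis using H[rule_format, of 1 "\<lambda>_. min x y" "\<lambda>_. max x y"] x y by (auto simp: dist_real_def)
    qed
    moreover have "\<bar>f (max x y) - f (min x y)\<bar> = \<bar>f y - f x\<bar>"
      by (cases "x \<le> y") (auto simp: max_def min_def abs_minus_commute)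
    ultimately show "dist (f y) (f x) < e" by (simp add: dist_real_def)
  qed
qed

lemma AC_loc_cont_on:
  fixes f :: "real \<Rightarrow> real"
  assumes "AC_loc (ivl a b) f" "c \<in> ivl a b" "d \<in> ivl a b"
  shows "continuous_on {c..d} f"
proof (cases "c \<le> d")
  case True then show ?thesis using assms AC_cont unfolding AC_loc_def by blast
next
  case False then show ?thesis by simp
qed

lemma AC_loc_isCont:
  fixes f :: "real \<Rightarrow> real"
  assumes "AC_loc (ivl a b) f" "x \<in> ivl a b"
  shows "isCont f x"
proof -
  obtain c d where cd: "c \<in> ivl a b" "d \<in> ivl a b" "c < x" "x < d" using ivl_between[OF assms(2)] by blast
  have "continuous_on {c..d} f" using AC_loc_cont_on[OF assms(1) cd(1,2)] .
  then show ?thesis using cd(3,4) continuous_on_interior[of "{c..d}" f x] by simp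
qed

lemma AC_comb:
  fixes F f g :: "real \<Rightarrow> real"
  assumes f: "abs_cont_on c d f" and g: "abs_cont_on c d g"
    and K: "\<And>s t. c \<le> s \<Longrightarrow> s \<le> t \<Longrightarrow> t \<le> d \<Longrightarrow> \<bar>F t - F s\<bar> \<le> K*(\<bar>f t - f s\<bar> + \<bar>g t - g s\<bar>)"
  shows "abs_cont_on c d F"
  unfolding abs_cont_on_def
proof (intro allI impI)
  fix e :: real assume e: "e > 0"
  define K' where "K' = \<bar>K\<bar> + 1"
  have K': "K' > 0" unfolding K'_def by simp
  have e': "e / (2*K') > 0" using e K' by simp
  obtain \<delta>1 where d1: "\<delta>1 > 0" and H1: "\<forall>(n::nat) (s::nat \<Rightarrow> real) (t::nat \<Rightarrow> real).
        (\<forall>k<n. c \<le> s k \<and> s k \<le> t k \<and> t k \<le> d) \<and>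
        (\<forall>j<n. \<forall>k<n. j \<noteq> k \<longrightarrow> t j \<le> s k \<or> t k \<le> s j) \<and>
        (\<Sum>k<n. t k - s k) < \<delta>1
        \<longrightarrow> (\<Sum>k<n. norm (f (t k) - f (s k))) < e / (2*K')"
    using f e' unfolding abs_cont_on_def by blast
  obtain \<delta>2 where d2: "\<delta>2 > 0" and H2: "\<forall>(n::nat) (s::nat \<Rightarrow> real) (t::nat \<Rightarrow> real).
        (\<forall>k<n. c \<le> s k \<and> s k \<le> t k \<and> t k \<le> d) \<and>
        (\<forall>j<n. \<forall>k<n. j \<noteq> k \<longrightarrow> t j \<le> s k \<or> t k \<le> s j) \<and>
        (\<Sum>k<n. t k - s k) < \<delta>2
        \<longrightarrow> (\<Sum>k<n. norm (g (t k) - g (s k))) < e / (2*K')"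
    using g e' unfolding abs_cont_on_def by blast
  show "\<exists>\<delta>>0. \<forall>(n::nat) (s::nat \<Rightarrow> real) (t::nat \<Rightarrow> real). (\<forall>k<n. c \<le> s k \<and> s k \<le> t k \<and> t k \<le> d) \<and>
        (\<forall>j<n. \<forall>k<n. j \<noteq> k \<longrightarrow> t j \<le> s k \<or> t k \<le> s j) \<and>
        (\<Sum>k<n. t k - s k) < \<delta> \<longrightarrow> (\<Sum>k<n. norm (F (t k) - F (s k))) < e"
  proof (intro exI[of _ "min \<delta>1 \<delta>2"] conjI allI impI)
    show "min \<delta>1 \<delta>2 > 0" using d1 d2 by simp
    fix n :: nat and s t :: "nat \<Rightarrow> real"
    assume A: "(\<forall>k<n. c \<le> s k \<and> s k \<le> t k \<and> t k \<le> d) \<and>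
        (\<forall>j<n. \<forall>k<n. j \<noteq> k \<longrightarrow> t j \<le> s k \<or> t k \<le> s j) \<and>
        (\<Sum>k<n. t k - s k) < min \<delta>1 \<delta>2"
    have s1: "(\<Sum>k<n. norm (f (t k) - f (s k))) < e / (2*K')" using H1 A by auto
    have s2: "(\<Sum>k<n. norm (g (t k) - g (s k))) < e / (2*K')" using H2 A by auto
    have "(\<Sum>k<n. norm (F (t k) - F (s k))) \<le> (\<Sum>k<n. K' * (\<bar>f (t k) - f (s k)\<bar> + \<bar>g (t k) - g (s k)\<bar>))"
    proof (rule sum_mono)
      fix k assume "k \<in> {..<n}"
      then have "c \<le> s k" "s k \<le> t k" "t k \<le> d" using A by auto
      then have "\<bar>F (t k) - F (s k)\<bar> \<le> K*(\<bar>f (t k) - f (s k)\<bar> + \<bar>g (t k) - g (s k)\<bar>)" by (rule K)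
      also have "\<dots> \<le> K'*(\<bar>f (t k) - f (s k)\<bar> + \<bar>g (t k) - g (s k)\<bar>)"
        unfolding K'_def by (rule mult_right_mono) auto
      finally show "norm (F (t k) - F (s k)) \<le> K' * (\<bar>f (t k) - f (s k)\<bar> + \<bar>g (t k) - g (s k)\<bar>)" by simp
    qed
    also have "\<dots> = K' * (\<Sum>k<n. norm (f (t k) - f (s k))) + K' * (\<Sum>k<n. norm (g (t k) - g (s k)))"
      by (simp add: sum_distrib_left sum.distrib distrib_left)
    also have "\<dots> < K' * (e / (2*K')) + K' * (e / (2*K'))"
      using s1 s2 K' by (intro add_strict_mono mult_strict_left_mono) auto
    also have "\<dots> = e" using K' by (simp add: field_simps)
    finally show "(\<Sum>k<n. norm (F (t k) - F (s k))) < e" .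
  qed
qed

lemma cont_bound:
  fixes f :: "real \<Rightarrow> real"
  assumes "continuous_on {c..d} f"
  shows "\<exists>B. \<forall>x\<in>{c..d}. \<bar>f x\<bar> \<le> B"
proof -
  have "compact (f ` {c..d})" using compact_continuous_image[OF assms] by simp
  then obtain B where "\<forall>y\<in>f ` {c..d}. norm y \<le> B" using compact_imp_bounded bounded_iff by metis
  then show ?thesis by auto
qed

lemma cont_lbound:
  fixes f :: "real \<Rightarrow> real"
  assumes "continuous_on {c..d} f" "\<forall>x\<in>{c..d}. f x \<noteq> 0"
  shows "\<exists>m>0. \<forall>x\<in>{c..d}. m \<le> \<bar>f x\<bar>"
proof (cases "c \<le> d")
  case False then show ?thesis by (intro exI[of _ 1]) auto
next
  case True
  have "continuous_on {c..d} (\<lambda>x. \<bar>f x\<bar>)" using assms(1) by (intro continuous_intros)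
  then obtain x0 where x0: "x0 \<in> {c..d}" "\<forall>x\<in>{c..d}. \<bar>f x0\<bar> \<le> \<bar>f x\<bar>"
    using continuous_attains_inf[of "{c..d}" "\<lambda>x. \<bar>f x\<bar>"] True by auto
  then show ?thesis using assms(2) by (intro exI[of _ "\<bar>f x0\<bar>"]) auto
qed

lemma AC_add:
  fixes f g :: "real \<Rightarrow> real"
  assumes "abs_cont_on c d f" "abs_cont_on c d g"
  shows "abs_cont_on c d (\<lambda>x. f x + g x)" "abs_cont_on c d (\<lambda>x. f x - g x)"
  by (rule AC_comb[OF assms, where K=1]; simp)+

lemma AC_mult:
  fixes f g :: "real \<Rightarrow> real"
  assumes f: "abs_cont_on c d f" and g: "abs_cont_on c d g"
  shows "abs_cont_on c d (\<lambda>x. f x * g x)"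
proof -
  obtain Bf where Bf: "\<forall>x\<in>{c..d}. \<bar>f x\<bar> \<le> Bf" using cont_bound[OF AC_cont[OF f]] by blast
  obtain Bg where Bg: "\<forall>x\<in>{c..d}. \<bar>g x\<bar> \<le> Bg" using cont_bound[OF AC_cont[OF g]] by blast
  show ?thesis
  proof (rule AC_comb[OF f g, where K="\<bar>Bf\<bar> + \<bar>Bg\<bar>"])
    fix s t assume st: "c \<le> s" "s \<le> t" "t \<le> d"
    have "f t * g t - f s * g s = (f t - f s) * g t + f s * (g t - g s)" by (simp add: algebra_simps)
    then have "\<bar>f t * g t - f s * g s\<bar> \<le> \<bar>f t - f s\<bar> * \<bar>g t\<bar> + \<bar>f s\<bar> * \<bar>g t - g s\<bar>"
      by (metis abs_mult abs_triangle_ineq)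
    also have "\<dots> \<le> \<bar>f t - f s\<bar> * (\<bar>Bf\<bar> + \<bar>Bg\<bar>) + (\<bar>Bf\<bar> + \<bar>Bg\<bar>) * \<bar>g t - g s\<bar>"
    proof (intro add_mono mult_left_mono mult_right_mono)
      have "\<bar>g t\<bar> \<le> Bg" using Bg st by auto
      then show "\<bar>g t\<bar> \<le> \<bar>Bf\<bar> + \<bar>Bg\<bar>" by linarith
      have "\<bar>f s\<bar> \<le> Bf" using Bf st by auto
      then show "\<bar>f s\<bar> \<le> \<bar>Bf\<bar> + \<bar>Bg\<bar>" by linarith
    qed auto
    finally show "\<bar>f t * g t - f s * g s\<bar> \<le> (\<bar>Bf\<bar> + \<bar>Bg\<bar>) * (\<bar>f t - f s\<bar> + \<bar>g t - g s\<bar>)"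
      by (simp add: algebra_simps)
  qed
qed

lemma AC_const: "abs_cont_on c d (\<lambda>x. k)"
  unfolding abs_cont_on_def by (auto intro: exI[of _ 1])

lemma AC_inverse:
  fixes g :: "real \<Rightarrow> real"
  assumes g: "abs_cont_on c d g" and nz: "\<forall>x\<in>{c..d}. g x \<noteq> 0"
  shows "abs_cont_on c d (\<lambda>x. 1 / g x)"
proof -
  obtain m where m: "m > 0" "\<forall>x\<in>{c..d}. m \<le> \<bar>g x\<bar>" using cont_lbound[OF AC_cont[OF g] nz] by blast
  show ?thesis
  proof (rule AC_comb[OF g g, where K="1/(m*m)"])
    fix s t assume st: "c \<le> s" "s \<le> t" "t \<le> d"
    have gs: "m \<le> \<bar>g s\<bar>" and gt: "m \<le> \<bar>g t\<bar>" using m st by auto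
    have "\<bar>1 / g t - 1 / g s\<bar> = \<bar>g t - g s\<bar> / (\<bar>g t\<bar> * \<bar>g s\<bar>)"
      using gs gt m by (simp add: field_simps abs_mult abs_minus_commute)
    also have "\<dots> \<le> \<bar>g t - g s\<bar> / (m * m)"
      using gs gt m by (intro divide_left_mono mult_mono) auto
    also have "\<dots> = 1 / (m * m) * \<bar>g t - g s\<bar>" by simp
    also have "\<dots> \<le> 1 / (m * m) * (\<bar>g t - g s\<bar> + \<bar>g t - g s\<bar>)"
      using m by (intro mult_left_mono) auto
    finally show "\<bar>1 / g t - 1 / g s\<bar> \<le> 1 / (m * m) * (\<bar>g t - g s\<bar> + \<bar>g t - g s\<bar>)" .
  qed
qed

lemma AC_div:
  fixes f g :: "real \<Rightarrow> real"
  assumes "abs_cont_on c d f" "abs_cont_on c d g" "\<forall>x\<in>{c..d}. g x \<noteq> 0"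
  shows "abs_cont_on c d (\<lambda>x. f x / g x)"
  using AC_mult[OF assms(1) AC_inverse[OF assms(2,3)]] by simp


lemma sol_real:
  assumes "is_sol a b p q r (z::real) f f1"
  shows "AC_loc (ivl a b) f" "AC_loc (ivl a b) f1"
    "AE x in lebesgue. x \<in> ivl a b \<longrightarrow> (f has_real_derivative f1 x / p x) (at x)"
    "AE x in lebesgue. x \<in> ivl a b \<longrightarrow> (f1 has_real_derivative (q x - z * r x) * f x) (at x)"
  using assms unfolding is_sol_def by (simp_all add: has_real_derivative_iff_has_vector_derivative)

lemma AC_loc_mult:
  fixes f g :: "real \<Rightarrow> real"
  shows "AC_loc I f \<Longrightarrow> AC_loc I g \<Longrightarrow> AC_loc I (\<lambda>x. f x * g x)"
  unfolding AC_loc_def using AC_mult by blast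

lemma AC_loc_diff:
  fixes f g :: "real \<Rightarrow> real"
  shows "AC_loc I f \<Longrightarrow> AC_loc I g \<Longrightarrow> AC_loc I (\<lambda>x. f x - g x)"
  unfolding AC_loc_def using AC_add(2) by blast

lemma AC_loc_on:
  fixes f :: "real \<Rightarrow> real"
  shows "AC_loc I f \<Longrightarrow> s \<in> I \<Longrightarrow> t \<in> I \<Longrightarrow> s \<le> t \<Longrightarrow> abs_cont_on s t f"
  unfolding AC_loc_def by blast

lemma int_prod:
  fixes h k :: "real \<Rightarrow> real"
  assumes "L1_loc (ivl a b) k" "s \<in> ivl a b" "t \<in> ivl a b" "continuous_on {s..t} h"
  shows "(\<lambda>x. h x * k x) absolutely_integrable_on {s..t}"
proof (cases "s \<le> t")
  case False then show ?thesis by simp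
next
  case True
  have k: "k absolutely_integrable_on {s..t}" using assms True unfolding L1_loc_def by blast
  have hm: "h \<in> borel_measurable (lebesgue_on {s..t})"
    using continuous_imp_measurable_on_sets_lebesgue[OF assms(4)] by simp
  have "bounded (h ` {s..t})" using compact_continuous_image[OF assms(4)] compact_imp_bounded by blast
  then show ?thesis using absolutely_integrable_bounded_measurable_product_real[OF hm _ _ k] by simp
qed

lemma AE_ivl_sub:
  assumes "AE x in lebesgue. x \<in> ivl a b \<longrightarrow> P x" "s \<in> ivl a b" "t \<in> ivl a b"
  shows "AE x in lebesgue. x \<in> {s..t} \<longrightarrow> P x"
  using assms(1) by (rule eventually_mono) (use ivl_sub[OF assms(2,3)] in auto)

lemma int_eq_lint:
  fixes k :: "real \<Rightarrow> real"
  assumes "k absolutely_integrable_on S"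
  shows "integral S k = set_lebesgue_integral lebesgue S k"
  using has_integral_set_lebesgue[OF assms] by (rule integral_unique)

lemma int_nonneg_AE:
  fixes k :: "real \<Rightarrow> real"
  assumes "k absolutely_integrable_on S" "AE x in lebesgue. x \<in> S \<longrightarrow> 0 \<le> k x"
  shows "integral S k \<ge> 0"
proof -
  have "0 \<le> set_lebesgue_integral lebesgue S k"
    unfolding set_lebesgue_integral_def
    by (rule integral_nonneg_AE) (use assms(2) in \<open>auto elim!: eventually_mono simp: indicator_def\<close>)
  then show ?thesis using int_eq_lint[OF assms(1)] by simp
qed

lemma int_pos_AE:
  fixes k :: "real \<Rightarrow> real"
  assumes "k absolutely_integrable_on {s..t}" "s < t" "AE x in lebesgue. x \<in> {s..t} \<longrightarrow> 0 < k x"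
  shows "integral {s..t} k > 0"
proof -
  let ?g = "\<lambda>x. indicator {s..t} x *\<^sub>R k x"
  have gi: "integrable lebesgue ?g" using assms(1) unfolding set_integrable_def .
  have nn: "AE x in lebesgue. 0 \<le> ?g x" using assms(3) by (auto elim!: eventually_mono simp: indicator_def)
  have "AE x in lebesgue. x \<in> {s..t} \<longrightarrow> 0 \<le> k x" using assms(3) by (rule eventually_mono) auto
  then have ge: "integral {s..t} k \<ge> 0" using int_nonneg_AE[OF assms(1)] by blast
  have "integral {s..t} k \<noteq> 0"
  proof
    assume "integral {s..t} k = 0"
    then have "integral\<^sup>L lebesgue ?g = 0" using int_eq_lint[OF assms(1)] unfolding set_lebesgue_integral_def by simp
    then have "AE x in lebesgue. ?g x = 0" using integral_nonneg_eq_0_iff_AE[OF gi nn] by simp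
    then have "AE x in lebesgue. x \<notin> {s..t}" using assms(3) by eventually_elim (auto simp: indicator_def)
    then have "{s..t} \<in> null_sets lebesgue" by (subst AE_iff_null_sets) auto
    then have "emeasure lebesgue {s..t} = 0" by auto
    then show False using assms(2) by simp
  qed
  then show ?thesis using ge by simp
qed


lemma lef_ev:
  assumes "x \<in> ivl a b"
  shows "eventually (\<lambda>t. a < ereal t \<and> t < x) (left_end_filter a)"
proof (cases "a = -\<infinity>")
  case True
  then show ?thesis unfolding left_end_filter_def
    by (simp add: eventually_at_bot_linorder)
next
  case False
  have ax: "a < ereal x" using assms unfolding ivl_def by auto
  then obtain a' where a': "a = ereal a'" using False by (cases a) auto
  then have "a' < x" using ax by simp
  then show ?thesis using False a' unfolding left_end_filter_def
    by (simp add: eventually_at_right[OF \<open>a' < x\<close>]) (intro exI[of _ x], auto)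
qed

lemma lef_nontriv:
  assumes "x \<in> ivl a b"
  shows "left_end_filter a \<noteq> bot"
proof (cases "a = -\<infinity>")
  case True then show ?thesis unfolding left_end_filter_def by simp
next
  case False then show ?thesis unfolding left_end_filter_def by simp
qed

lemma set_meas: "{t. a < ereal t \<and> t < y} \<in> sets lebesgue"
proof -
  have "open {t. a < ereal t \<and> t < y}"
  proof (cases a)
    case (real a')
    then have "{t. a < ereal t \<and> t < y} = {a'<..<y}" by auto
    then show ?thesis by simp
  next
    case PInf
    then show ?thesis by simp
  next
    case MInf
    then have "{t. a < ereal t \<and> t < y} = {..<y}" by auto
    then show ?thesis by simp
  qed
  then show ?thesis by (simp add: borel_open)
qed

lemma I_seq:
  fixes g :: "real \<Rightarrow> real"
  assumes int: "set_integrable lebesgue {x. a < ereal x \<and> x < c} g"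
    and X: "\<And>t. a < ereal t \<Longrightarrow> eventually (\<lambda>n. X n \<le> t) sequentially"
    and ac: "a < ereal c"
  shows "(\<lambda>n. LINT t:{t. a < ereal t \<and> t < X n}|lebesgue. g t) \<longlonglongrightarrow> 0"
proof -
  define Y where "Y n = min (X n) c" for n
  have ev: "eventually (\<lambda>n. X n \<le> c) sequentially" using X[OF ac] .
  have "(\<lambda>n. LINT t:{t. a < ereal t \<and> t < Y n}|lebesgue. g t) \<longlonglongrightarrow> 0"
  proof -
    define S where "S n t = indicator {t. a < ereal t \<and> t < Y n} t *\<^sub>R g t" for n t
    define W where "W t = indicator {x. a < ereal x \<and> x < c} t *\<^sub>R \<bar>g t\<bar>" for t
    have h1: "(\<lambda>t::real. 0::real) \<in> borel_measurable lebesgue" by simp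
    have h2: "S n \<in> borel_measurable lebesgue" for n
    proof -
      have "set_integrable lebesgue {t. a < ereal t \<and> t < Y n} g"
        by (rule set_integrable_subset[OF int set_meas]) (auto simp: Y_def)
      then show ?thesis unfolding set_integrable_def S_def by blast
    qed
    have h3: "integrable lebesgue W"
    proof -
      have "W = (\<lambda>x. norm (indicator {x. a < ereal x \<and> x < c} x *\<^sub>R g x))"
        by (auto simp: W_def indicator_def)
      then show ?thesis using integrable_norm[OF int[unfolded set_integrable_def]] by simp
    qed
    have h5: "AE x in lebesgue. norm (S n x) \<le> W x" for n
    proof (rule AE_I2)
      fix x
      have Yc: "Y n \<le> c" by (simp add: Y_def)
      show "norm (S n x) \<le> W x"
      proof (cases "a < ereal x \<and> x < Y n")
        case True
        then have "a < ereal x \<and> x < c" using Yc by linarith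
        then show ?thesis using True unfolding S_def W_def by simp
      next
        case False
        then show ?thesis unfolding S_def W_def by (simp add: indicator_def)
      qed
    qed
    have h4: "AE x in lebesgue. (\<lambda>n. S n x) \<longlonglongrightarrow> 0"
    proof (rule AE_I2)
      fix x
      show "(\<lambda>n. S n x) \<longlonglongrightarrow> 0"
      proof (cases "a < ereal x")
        case True
        have "eventually (\<lambda>n. S n x = 0) sequentially"
          using X[OF True] by eventually_elim (auto simp: S_def Y_def indicator_def)
        then show ?thesis by (rule tendsto_eventually)
      next
        case False then show ?thesis by (simp add: S_def indicator_def)
      qed
    qed
    have "(\<lambda>n. integral\<^sup>L lebesgue (S n)) \<longlonglongrightarrow> integral\<^sup>L lebesgue (\<lambda>t::real. 0::real)"
      using integral_dominated_convergence[OF h1 h2 h3 h4 h5] .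
    then show ?thesis unfolding set_lebesgue_integral_def S_def by simp
  qed
  moreover have "eventually (\<lambda>n. (LINT t:{t. a < ereal t \<and> t < Y n}|lebesgue. g t) =
                  (LINT t:{t. a < ereal t \<and> t < X n}|lebesgue. g t)) sequentially"
    using ev by eventually_elim (simp add: Y_def min_def)
  ultimately show ?thesis by (rule Lim_transform_eventually)
qed

lemma I_lim:
  fixes g :: "real \<Rightarrow> real"
  assumes int: "set_integrable lebesgue {x. a < ereal x \<and> x < c} g" and c: "c \<in> ivl a b"
  shows "((\<lambda>x. LINT t:{t. a < ereal t \<and> t < x}|lebesgue. g t) \<longlongrightarrow> 0) (left_end_filter a)"
proof -
  have ac: "a < ereal c" using c unfolding ivl_def by auto
  show ?thesis
  proof (cases "a = -\<infinity>")
    case True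
    have F: "left_end_filter a = at_bot" using True by (simp add: left_end_filter_def)
    have "((\<lambda>x. LINT t:{t. a < ereal t \<and> t < x}|lebesgue. g t) \<longlongrightarrow> 0) at_bot"
    proof (rule tendsto_at_botI_sequentially)
      fix X :: "nat \<Rightarrow> real" assume X: "filterlim X at_bot sequentially"
      show "(\<lambda>n. LINT t:{t. a < ereal t \<and> t < X n}|lebesgue. g t) \<longlonglongrightarrow> 0"
      proof (rule I_seq[OF int _ ac])
        fix t show "eventually (\<lambda>n. X n \<le> t) sequentially" using X unfolding filterlim_at_bot by blast
      qed
    qed
    then show ?thesis using F by simp
  next
    case False
    then obtain a' where a': "a = ereal a'" using ac by (cases a) auto
    have a'c: "a' < c" using ac a' by simp
    have F: "left_end_filter a = at_right a'" using False a' by (simp add: left_end_filter_def)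
    have "((\<lambda>x. LINT t:{t. a < ereal t \<and> t < x}|lebesgue. g t) \<longlongrightarrow> 0) (at_right a')"
    proof (rule tendsto_at_right_sequentially[OF a'c])
      fix S :: "nat \<Rightarrow> real" assume S: "\<And>n. a' < S n" "\<And>n. S n < c" "antimono_on UNIV S" "S \<longlonglongrightarrow> a'"
      show "(\<lambda>n. LINT t:{t. a < ereal t \<and> t < S n}|lebesgue. g t) \<longlonglongrightarrow> 0"
      proof (rule I_seq[OF int _ ac])
        fix t assume "a < ereal t"
        then have "a' < t" using a' by simp
        then have "eventually (\<lambda>n. S n < t) sequentially" using order_tendstoD(2)[OF S(4)] by blast
        then show "eventually (\<lambda>n. S n \<le> t) sequentially" by eventually_elim simp
      qed
    qed
    then show ?thesis using F by simp
  qed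
qed


locale SL =
  fixes a b :: ereal and p q r u v u1 v1 :: "real \<Rightarrow> real" and lam c :: real
  assumes coeffs: "SL_coeffs a b p q r"
    and nonosc: "nonosc_at_a a b p q r lam"
    and u_sol: "is_sol a b p q r lam u u1"
    and v_sol: "is_sol a b p q r lam v v1"
    and u_principal: "principal_at_a a b p q r lam u"
    and v_nonprincipal: "lin_indep_on (ivl a b) u v"
    and wronskian: "\<forall>x\<in>ivl a b. v x * u1 x - v1 x * u x = 1"
    and c_in: "c \<in> ivl a b"
    and integrable: "set_integrable lebesgue {x. a < ereal x \<and> x < c} (\<lambda>x. u x * v x * r x)"
begin

lemma rpos: "AE x in lebesgue. x \<in> ivl a b \<longrightarrow> r x > 0"
  and ppos: "AE x in lebesgue. x \<in> ivl a b \<longrightarrow> p x > 0"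
  and L1r: "L1_loc (ivl a b) r"
  and L1p: "L1_loc (ivl a b) (\<lambda>x. 1 / p x)"
  and L1q: "L1_loc (ivl a b) q"
  using coeffs unfolding SL_coeffs_def by auto

lemma u_AC: "AC_loc (ivl a b) u" and u1_AC: "AC_loc (ivl a b) u1"
  and u_der: "AE x in lebesgue. x \<in> ivl a b \<longrightarrow> (u has_real_derivative u1 x / p x) (at x)"
  and u1_der: "AE x in lebesgue. x \<in> ivl a b \<longrightarrow> (u1 has_real_derivative (q x - lam * r x) * u x) (at x)"
  using sol_real[OF u_sol] by auto

lemma v_AC: "AC_loc (ivl a b) v" and v1_AC: "AC_loc (ivl a b) v1"
  and v_der: "AE x in lebesgue. x \<in> ivl a b \<longrightarrow> (v has_real_derivative v1 x / p x) (at x)"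
  and v1_der: "AE x in lebesgue. x \<in> ivl a b \<longrightarrow> (v1 has_real_derivative (q x - lam * r x) * v x) (at x)"
  using sol_real[OF v_sol] by auto

lemma nz_near:
  assumes "is_sol a b p q r lam f f1" "\<exists>x\<in>ivl a b. f x \<noteq> 0"
  shows "\<exists>c'\<in>ivl a b. \<forall>x. a < ereal x \<and> x < c' \<longrightarrow> f x \<noteq> 0"
proof -
  obtain c1 where c1: "c1 \<in> ivl a b" and fin: "finite {x. a < ereal x \<and> x < c1 \<and> f x = 0}"
    using nonosc assms unfolding nonosc_at_a_def by blast
  define Z where "Z = {x. a < ereal x \<and> x < c1 \<and> f x = 0}"
  show ?thesis
  proof (cases "Z = {}")
    case True
    then show ?thesis using c1 unfolding Z_def by blast
  next
    case False
    have fZ: "finite Z" using fin Z_def by simp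
    have mZ: "Min Z \<in> Z" using Min_in[OF fZ False] .
    then have m: "a < ereal (Min Z)" "Min Z < c1" unfolding Z_def by auto
    have "Min Z \<in> ivl a b"
    proof -
      have "ereal c1 < b" using c1 unfolding ivl_def by auto
      moreover have "ereal (Min Z) \<le> ereal c1" using m(2) by simp
      ultimately have "ereal (Min Z) < b" by (meson le_less_trans)
      then show ?thesis using m(1) unfolding ivl_def by auto
    qed
    moreover have "\<forall>x. a < ereal x \<and> x < Min Z \<longrightarrow> f x \<noteq> 0"
    proof (intro allI impI)
      fix x assume x: "a < ereal x \<and> x < Min Z"
      show "f x \<noteq> 0"
      proof
        assume "f x = 0"
        then have "x \<in> Z" using x m unfolding Z_def by auto
        then have "Min Z \<le> x" using Min_le[OF fZ] by blast
        then show False using x by simp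
      qed
    qed
    ultimately show ?thesis by blast
  qed
qed

lemma u_nontriv: "\<exists>x\<in>ivl a b. u x \<noteq> 0"
proof (rule ccontr)
  assume "\<not> ?thesis"
  then have "\<forall>x\<in>ivl a b. (1::real) * u x + (0::real) * v x = 0" by simp
  then have "(1::real) = 0 \<and> (0::real) = 0" using v_nonprincipal unfolding lin_indep_on_def by blast
  then show False by simp
qed

lemma v_nontriv: "\<exists>x\<in>ivl a b. v x \<noteq> 0"
proof (rule ccontr)
  assume "\<not> ?thesis"
  then have "\<forall>x\<in>ivl a b. (0::real) * u x + (1::real) * v x = 0" by simp
  then have "(0::real) = 0 \<and> (1::real) = 0" using v_nonprincipal unfolding lin_indep_on_def by blast
  then show False by simp
qed

lemma c0_ex: "\<exists>c0. c0 \<in> ivl a b \<and> c0 \<le> c \<and> (\<forall>x. a < ereal x \<and> x < c0 \<longrightarrow> u x \<noteq> 0 \<and> v x \<noteq> 0)"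
proof -
  obtain cu where cu: "cu \<in> ivl a b" "\<forall>x. a < ereal x \<and> x < cu \<longrightarrow> u x \<noteq> 0"
    using nz_near[OF u_sol u_nontriv] by blast
  obtain cv where cv: "cv \<in> ivl a b" "\<forall>x. a < ereal x \<and> x < cv \<longrightarrow> v x \<noteq> 0"
    using nz_near[OF v_sol v_nontriv] by blast
  define c0 where "c0 = min c (min cu cv)"
  have "c0 \<in> ivl a b" unfolding c0_def using c_in cu(1) cv(1) by (auto simp: min_def)
  moreover have "c0 \<le> c" unfolding c0_def by simp
  moreover have "\<forall>x. a < ereal x \<and> x < c0 \<longrightarrow> u x \<noteq> 0 \<and> v x \<noteq> 0"
    using cu(2) cv(2) unfolding c0_def by auto
  ultimately show ?thesis by blast
qed

definition c0 where "c0 = (SOME c0. c0 \<in> ivl a b \<and> c0 \<le> c \<and> (\<forall>x. a < ereal x \<and> x < c0 \<longrightarrow> u x \<noteq> 0 \<and> v x \<noteq> 0))"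

lemma c0: "c0 \<in> ivl a b" "c0 \<le> c" "\<And>x. a < ereal x \<Longrightarrow> x < c0 \<Longrightarrow> u x \<noteq> 0 \<and> v x \<noteq> 0"
  using someI_ex[OF c0_ex] unfolding c0_def[symmetric] by blast+

definition near where "near x \<longleftrightarrow> a < ereal x \<and> x < c0"

lemma near_ivl: "near x \<Longrightarrow> x \<in> ivl a b"
proof -
  assume n: "near x"
  have "ereal c0 < b" using c0(1) unfolding ivl_def by auto
  moreover have "ereal x \<le> ereal c0" using n unfolding near_def by simp
  ultimately have "ereal x < b" by (meson le_less_trans)
  then show ?thesis using n unfolding near_def ivl_def by simp
qed

lemma near_nz: "near x \<Longrightarrow> u x \<noteq> 0" "near x \<Longrightarrow> v x \<noteq> 0"
  using c0(3) unfolding near_def by auto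

lemma near_between: "near s \<Longrightarrow> near t \<Longrightarrow> s \<le> x \<Longrightarrow> x \<le> t \<Longrightarrow> near x"
proof -
  assume "near s" "near t" "s \<le> x" "x \<le> t"
  moreover have "ereal s \<le> ereal x" using \<open>s \<le> x\<close> by simp
  ultimately show "near x" unfolding near_def by (meson less_le_trans le_less_trans)
qed

lemma cont_on: "s \<in> ivl a b \<Longrightarrow> t \<in> ivl a b \<Longrightarrow> continuous_on {s..t} u"
  "s \<in> ivl a b \<Longrightarrow> t \<in> ivl a b \<Longrightarrow> continuous_on {s..t} v"
  "s \<in> ivl a b \<Longrightarrow> t \<in> ivl a b \<Longrightarrow> continuous_on {s..t} u1"
  "s \<in> ivl a b \<Longrightarrow> t \<in> ivl a b \<Longrightarrow> continuous_on {s..t} v1"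
  using AC_loc_cont_on u_AC v_AC u1_AC v1_AC by blast+

lemma w_mono:
  assumes "near s" "near t" "s \<le> t"
  shows "u s / v s \<le> u t / v t"
proof -
  have sI: "s \<in> ivl a b" and tI: "t \<in> ivl a b" using near_ivl assms by auto
  have vnz: "\<forall>x\<in>{s..t}. v x \<noteq> 0" using near_between[OF assms(1,2)] near_nz by auto
  have ac: "abs_cont_on s t (\<lambda>x. u x / v x)"
    using AC_div[OF AC_loc_on[OF u_AC sI tI assms(3)] AC_loc_on[OF v_AC sI tI assms(3)] vnz] .
  define k where "k x = 1 / (v x * v x) * (1 / p x)" for x
  have ki: "k absolutely_integrable_on {s..t}"
  proof -
    have "continuous_on {s..t} (\<lambda>x. 1 / (v x * v x))"
      using cont_on(2)[OF sI tI] vnz by (intro continuous_intros) auto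
    then show ?thesis unfolding k_def using int_prod[OF L1p sI tI] by blast
  qed
  have der: "AE x in lebesgue. x \<in> {s..t} \<longrightarrow> ((\<lambda>x. u x / v x) has_real_derivative k x) (at x)"
  proof -
    have "AE x in lebesgue. x \<in> ivl a b \<longrightarrow> (u has_real_derivative u1 x / p x) (at x)
        \<and> (v has_real_derivative v1 x / p x) (at x) \<and> p x > 0"
      using u_der v_der ppos by eventually_elim auto
    then show ?thesis
    proof (rule eventually_mono)
      fix x assume H: "x \<in> ivl a b \<longrightarrow> (u has_real_derivative u1 x / p x) (at x)
        \<and> (v has_real_derivative v1 x / p x) (at x) \<and> p x > 0"
      show "x \<in> {s..t} \<longrightarrow> ((\<lambda>x. u x / v x) has_real_derivative k x) (at x)"
      proof
        assume x: "x \<in> {s..t}"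
        then have xI: "x \<in> ivl a b" using ivl_sub[OF sI tI] by auto
        have vx: "v x \<noteq> 0" using vnz x by auto
        have px: "p x > 0" using H xI by auto
        have W: "v x * u1 x - v1 x * u x = 1" using wronskian xI by auto
        have "((\<lambda>x. u x / v x) has_real_derivative ((u1 x / p x) * v x - u x * (v1 x / p x)) / (v x * v x)) (at x)"
        proof -
          have du: "(u has_real_derivative u1 x / p x) (at x)" and dv: "(v has_real_derivative v1 x / p x) (at x)"
            using H xI by auto
          show ?thesis using DERIV_divide[OF du dv vx] .
        qed
        moreover have "((u1 x / p x) * v x - u x * (v1 x / p x)) / (v x * v x) = k x"
        proof -
          have "(u1 x / p x) * v x - u x * (v1 x / p x) = (v x * u1 x - v1 x * u x) / p x"
            using px by (simp add: field_simps)
          then show ?thesis unfolding k_def using W by simp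
        qed
        ultimately show "((\<lambda>x. u x / v x) has_real_derivative k x) (at x)" by simp
      qed
    qed
  qed
  have "(k has_integral (u t / v t - u s / v s)) {s..t}"
    using FTC_AC[OF assms(3) ac _ der] ki by (simp add: set_lebesgue_integral_eq_integral(1))
  then have eq: "u t / v t - u s / v s = integral {s..t} k" by (simp add: integral_unique)
  have "AE x in lebesgue. x \<in> {s..t} \<longrightarrow> 0 \<le> k x"
    using ppos by (rule eventually_mono) (use ivl_sub[OF sI tI] in \<open>auto simp: k_def\<close>)
  then have "integral {s..t} k \<ge> 0" using int_nonneg_AE[OF ki] by blast
  then show ?thesis using eq by simp
qed

end

context SL begin

lemma w_lim: "((\<lambda>x. u x / v x) \<longlongrightarrow> 0) (left_end_filter a)"
  using u_principal v_sol v_nonprincipal unfolding principal_at_a_def by blast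

lemma near_ev: "eventually (\<lambda>t. near t) (left_end_filter a)"
  using lef_ev[OF c0(1)] unfolding near_def .

lemma nontriv: "left_end_filter a \<noteq> bot"
  using lef_nontriv[OF c0(1)] .

lemma w_pos:
  assumes "near x"
  shows "u x / v x > 0"
proof -
  have xI: "x \<in> ivl a b" using near_ivl[OF assms] .
  have "eventually (\<lambda>t. u t / v t \<le> u x / v x) (left_end_filter a)"
    using lef_ev[OF xI]
  proof (rule eventually_mono)
    fix t assume t: "a < ereal t \<and> t < x"
    then have "near t" using assms unfolding near_def by auto
    then show "u t / v t \<le> u x / v x" using w_mono[OF _ assms] t by auto
  qed
  then have ge: "0 \<le> u x / v x" using tendsto_le[OF nontriv tendsto_const w_lim] by blast
  have nz: "u x / v x \<noteq> 0" using near_nz[OF assms] by simp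
  show ?thesis using order_le_neq_trans[OF ge nz[symmetric]] .
qed

lemma kernel_bound:
  assumes "near t" "near x" "t \<le> x"
  shows "\<bar>u t * v x - v t * u x\<bar> \<le> \<bar>v t\<bar> * \<bar>u x\<bar>"
proof -
  have vt: "v t \<noteq> 0" and vx: "v x \<noteq> 0" using near_nz assms by auto
  have wt: "u t / v t > 0" and wx: "u x / v x > 0" using w_pos assms by auto
  have le: "u t / v t \<le> u x / v x" using w_mono assms by auto
  have eq: "u t * v x - v t * u x = v t * v x * (u t / v t - u x / v x)" using vt vx by (simp add: field_simps)
  have "\<bar>u t / v t - u x / v x\<bar> \<le> u x / v x" using wt wx le by simp
  then have "\<bar>u t * v x - v t * u x\<bar> \<le> \<bar>v t\<bar> * (\<bar>v x\<bar> * (u x / v x))"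
    unfolding eq abs_mult mult.assoc by (intro mult_left_mono) auto
  also have "\<bar>v x\<bar> * (u x / v x) = \<bar>u x\<bar>"
  proof -
    have "u x / v x = \<bar>u x / v x\<bar>" using abs_of_pos[OF wx] by simp
    also have "\<dots> = \<bar>u x\<bar> / \<bar>v x\<bar>" by simp
    finally have "\<bar>v x\<bar> * (u x / v x) = \<bar>v x\<bar> * (\<bar>u x\<bar> / \<bar>v x\<bar>)" by simp
    also have "\<dots> = \<bar>u x\<bar>" using vx by simp
    finally show ?thesis .
  qed
  finally show ?thesis .
qed

definition Iab where "Iab x = (LINT t:{t. a < ereal t \<and> t < x}|lebesgue. \<bar>u t * v t * r t\<bar>)"

lemma Iint: "x \<le> c \<Longrightarrow> set_integrable lebesgue {t. a < ereal t \<and> t < x} (\<lambda>t. \<bar>u t * v t * r t\<bar>)"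
  by (rule set_integrable_subset[OF set_integrable_abs[OF integrable] set_meas]) auto

lemma I_nonneg: "Iab x \<ge> 0"
  unfolding Iab_def set_lebesgue_integral_def by (rule integral_nonneg_AE) (auto simp: indicator_def)

lemma I_mono:
  assumes "t \<le> x" "x \<le> c"
  shows "Iab t \<le> Iab x"
proof -
  have it: "set_integrable lebesgue {s. a < ereal s \<and> s < t} (\<lambda>t. \<bar>u t * v t * r t\<bar>)" using Iint assms by simp
  have ix: "set_integrable lebesgue {s. a < ereal s \<and> s < x} (\<lambda>t. \<bar>u t * v t * r t\<bar>)" using Iint assms by simp
  show ?thesis unfolding Iab_def set_lebesgue_integral_def
    by (rule integral_mono) (use it ix assms in \<open>auto simp: set_integrable_def indicator_def\<close>)
qed

lemma I_lim0: "(Iab \<longlongrightarrow> 0) (left_end_filter a)"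
  unfolding Iab_def using I_lim[OF set_integrable_abs[OF integrable] c_in] .

lemma phi_bound:
  "near x \<Longrightarrow> \<bar>phi_n a u v r n x\<bar> \<le> \<bar>u x\<bar> * Iab x ^ n"
proof (induction n arbitrary: x)
  case 0 then show ?case by simp
next
  case (Suc n)
  have xc: "x \<le> c" using Suc.prems c0(2) unfolding near_def by simp
  define S where "S = {t. a < ereal t \<and> t < x}"
  define F where "F t = (u t * v x - v t * u x) * phi_n a u v r n t * r t" for t
  define C where "C = \<bar>u x\<bar> * Iab x ^ n"
  have C0: "C \<ge> 0" unfolding C_def using I_nonneg by simp
  have pw: "\<bar>indicator S t * F t\<bar> \<le> indicator S t * (C * \<bar>u t * v t * r t\<bar>)" for t
  proof (cases "t \<in> S")
    case True
    then have tn: "near t" and tx: "t \<le> x" using Suc.prems unfolding S_def near_def by auto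
    have kb: "\<bar>u t * v x - v t * u x\<bar> \<le> \<bar>v t\<bar> * \<bar>u x\<bar>" using kernel_bound[OF tn Suc.prems tx] .
    have ih: "\<bar>phi_n a u v r n t\<bar> \<le> \<bar>u t\<bar> * Iab t ^ n" using Suc.IH[OF tn] .
    have Im: "Iab t ^ n \<le> Iab x ^ n" using I_mono[OF tx xc] I_nonneg by (intro power_mono) auto
    have "\<bar>F t\<bar> = \<bar>u t * v x - v t * u x\<bar> * \<bar>phi_n a u v r n t\<bar> * \<bar>r t\<bar>" unfolding F_def by (simp add: abs_mult)
    have In: "0 \<le> Iab t ^ n" by (simp add: I_nonneg)
    have "\<bar>u t * v x - v t * u x\<bar> * \<bar>phi_n a u v r n t\<bar> * \<bar>r t\<bar> \<le> (\<bar>v t\<bar> * \<bar>u x\<bar>) * (\<bar>u t\<bar> * Iab t ^ n) * \<bar>r t\<bar>"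
      by (intro mult_right_mono mult_mono kb ih) (use In in auto)
    also have "\<dots> \<le> (\<bar>v t\<bar> * \<bar>u x\<bar>) * (\<bar>u t\<bar> * Iab x ^ n) * \<bar>r t\<bar>"
      by (intro mult_right_mono mult_left_mono Im) auto
    finally have B: "\<bar>u t * v x - v t * u x\<bar> * \<bar>phi_n a u v r n t\<bar> * \<bar>r t\<bar> \<le> (\<bar>v t\<bar> * \<bar>u x\<bar>) * (\<bar>u t\<bar> * Iab x ^ n) * \<bar>r t\<bar>" .
    have "\<bar>F t\<bar> = \<bar>u t * v x - v t * u x\<bar> * \<bar>phi_n a u v r n t\<bar> * \<bar>r t\<bar>" unfolding F_def by (simp add: abs_mult)
    also have "\<dots> \<le> (\<bar>v t\<bar> * \<bar>u x\<bar>) * (\<bar>u t\<bar> * Iab x ^ n) * \<bar>r t\<bar>" by (rule B)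
    also have "\<dots> = C * \<bar>u t * v t * r t\<bar>" unfolding C_def by (simp add: abs_mult)
    finally show ?thesis using True by simp
  next
    case False then show ?thesis by simp
  qed
  have RI: "integrable lebesgue (\<lambda>t. indicator S t * (C * \<bar>u t * v t * r t\<bar>))"
  proof -
    have "integrable lebesgue (\<lambda>t. C * (indicator S t *\<^sub>R \<bar>u t * v t * r t\<bar>))"
      using Iint[OF xc] unfolding S_def set_integrable_def by (intro integrable_mult_right) auto
    then show ?thesis by (simp add: mult.left_commute)
  qed
  have "\<bar>phi_n a u v r (Suc n) x\<bar> = \<bar>integral\<^sup>L lebesgue (\<lambda>t. indicator S t * F t)\<bar>"
    unfolding S_def F_def by (simp add: set_lebesgue_integral_def)
  also have "\<dots> \<le> integral\<^sup>L lebesgue (\<lambda>t. \<bar>indicator S t * F t\<bar>)"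
    using integral_norm_bound[of lebesgue "\<lambda>t. indicator S t * F t"] by simp
  also have "\<dots> \<le> integral\<^sup>L lebesgue (\<lambda>t. indicator S t * (C * \<bar>u t * v t * r t\<bar>))"
  proof (cases "integrable lebesgue (\<lambda>t. \<bar>indicator S t * F t\<bar>)")
    case True
    show ?thesis by (rule integral_mono[OF True RI pw])
  next
    case False
    then have "integral\<^sup>L lebesgue (\<lambda>t. \<bar>indicator S t * F t\<bar>) = 0" by (rule not_integrable_integral_eq)
    moreover have "integral\<^sup>L lebesgue (\<lambda>t. indicator S t * (C * \<bar>u t * v t * r t\<bar>)) \<ge> 0"
      using C0 by (intro integral_nonneg_AE) (auto simp: indicator_def)
    ultimately show ?thesis by simp
  qed
  also have "\<dots> = C * Iab x"
  proof -
    have "integral\<^sup>L lebesgue (\<lambda>t. indicator S t * (C * \<bar>u t * v t * r t\<bar>))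
        = integral\<^sup>L lebesgue (\<lambda>t. C * (indicator S t *\<^sub>R \<bar>u t * v t * r t\<bar>))"
      by (simp add: mult.left_commute)
    also have "\<dots> = C * Iab x" unfolding Iab_def set_lebesgue_integral_def S_def
      by (rule integral_mult_right_zero)
    finally show ?thesis .
  qed
  also have "\<dots> = \<bar>u x\<bar> * Iab x ^ Suc n" unfolding C_def by simp
  finally show ?case .
qed

end

lemma series_est:
  fixes A :: "nat \<Rightarrow> complex" and M q :: real
  assumes bnd: "\<And>n. norm (A n) \<le> M * q^n" and q: "0 \<le> q" "q \<le> 1/2"
  shows "summable A" "norm (suminf A - A 0) \<le> 2 * M * q"
proof -
  have M: "M \<ge> 0" using bnd[of 0] norm_ge_zero[of "A 0"] by (simp del: norm_ge_zero)
  have sg: "summable (\<lambda>n. M * q^n)" using q by (intro summable_mult summable_geometric) auto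
  show sA: "summable A" by (rule summable_comparison_test[OF _ sg]) (use bnd in auto)
  have sn: "summable (\<lambda>n. norm (A (Suc n)))"
  proof -
    have "summable (\<lambda>n. norm (A n))" by (rule summable_comparison_test[OF _ sg]) (use bnd in auto)
    then show ?thesis using summable_Suc_iff[of "\<lambda>n. norm (A n)"] by simp
  qed
  have sg1: "summable (\<lambda>n. M * q^(Suc n))"
    using sg summable_Suc_iff[of "\<lambda>n. M * q^n"] by simp
  have "suminf A - A 0 = (\<Sum>n. A (Suc n))" using suminf_split_head[OF sA] by simp
  then have "norm (suminf A - A 0) \<le> (\<Sum>n. norm (A (Suc n)))" using summable_norm[OF sn] by simp
  also have "\<dots> \<le> (\<Sum>n. M * q^(Suc n))" by (rule suminf_le[OF _ sn sg1]) (rule bnd)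
  also have "(\<Sum>n. M * q^(Suc n)) = M * q * (\<Sum>n. q^n)"
  proof -
    have "(\<lambda>n. M * q^(Suc n)) = (\<lambda>n. (M * q) * q^n)" by (simp add: mult.assoc)
    then show ?thesis using suminf_mult[of "\<lambda>n. q^n" "M*q"] q by (simp add: summable_geometric)
  qed
  also have "\<dots> = M * q / (1 - q)" using suminf_geometric[of q] q by simp
  also have "\<dots> \<le> 2 * M * q"
  proof -
    have "1 / (1 - q) \<le> 2" using q by (simp add: field_simps)
    then have "(M * q) * (1 / (1 - q)) \<le> (M * q) * 2" using M q by (intro mult_left_mono) auto
    then show ?thesis by simp
  qed
  finally show "norm (suminf A - A 0) \<le> 2 * M * q" .
qed

context SL begin

lemma phi_over_u:
  "((\<lambda>x. phi a u v r lam z x / complex_of_real (u x)) \<longlongrightarrow> 1) (left_end_filter a)"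
proof -
  define Q where "Q x = Iab x * norm (z - complex_of_real lam)" for x
  have Qlim: "(Q \<longlongrightarrow> 0) (left_end_filter a)"
    unfolding Q_def using tendsto_mult_left_zero[OF I_lim0] by simp
  have evQ: "eventually (\<lambda>x. Q x < 1/2) (left_end_filter a)"
    using order_tendstoD(2)[OF Qlim, of "1/2"] by simp
  have ev: "eventually (\<lambda>x. norm (phi a u v r lam z x / complex_of_real (u x) - 1) \<le> 2 * Q x) (left_end_filter a)"
    using evQ near_ev
  proof eventually_elim
    case (elim x)
    define A where "A n = complex_of_real (phi_n a u v r n x) * (z - complex_of_real lam) ^ n" for n
    have Q0: "0 \<le> Q x" unfolding Q_def using I_nonneg by simp
    have bnd: "norm (A n) \<le> \<bar>u x\<bar> * Q x ^ n" for n
    proof -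
      have "norm (A n) = \<bar>phi_n a u v r n x\<bar> * norm (z - complex_of_real lam) ^ n"
        unfolding A_def by (simp add: norm_mult norm_power)
      also have "\<dots> \<le> (\<bar>u x\<bar> * Iab x ^ n) * norm (z - complex_of_real lam) ^ n"
        by (intro mult_right_mono phi_bound elim) auto
      also have "\<dots> = \<bar>u x\<bar> * Q x ^ n" unfolding Q_def by (simp add: power_mult_distrib)
      finally show ?thesis .
    qed
    have est: "norm (suminf A - A 0) \<le> 2 * \<bar>u x\<bar> * Q x"
      using series_est(2)[OF bnd Q0] elim by simp
    have ph: "phi a u v r lam z x = suminf A" unfolding phi_def A_def by simp
    have A0: "A 0 = complex_of_real (u x)" unfolding A_def by simp
    have ux: "u x \<noteq> 0" using near_nz elim by auto
    have "phi a u v r lam z x / complex_of_real (u x) - 1 = (suminf A - A 0) / complex_of_real (u x)"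
      using ux unfolding ph A0 by (simp add: field_simps)
    then have "norm (phi a u v r lam z x / complex_of_real (u x) - 1) = norm (suminf A - A 0) / \<bar>u x\<bar>"
      by (simp add: norm_divide)
    also have "\<dots> \<le> 2 * \<bar>u x\<bar> * Q x / \<bar>u x\<bar>" using est ux by (intro divide_right_mono) auto
    also have "\<dots> = 2 * Q x" using ux by simp
    finally show ?case .
  qed
  have "((\<lambda>x. phi a u v r lam z x / complex_of_real (u x) - 1) \<longlongrightarrow> 0) (left_end_filter a)"
  proof (rule Lim_null_comparison[OF ev])
    show "((\<lambda>x. 2 * Q x) \<longlongrightarrow> 0) (left_end_filter a)" using tendsto_mult_right_zero[OF Qlim] by simp
  qed
  then show ?thesis by (rule LIM_zero_cancel)
qed

lemma part1: "((\<lambda>x. phi a u v r lam z1 x / phi a u v r lam z2 x) \<longlongrightarrow> 1) (left_end_filter a)"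
proof -
  have "((\<lambda>x. (phi a u v r lam z1 x / complex_of_real (u x)) / (phi a u v r lam z2 x / complex_of_real (u x))) \<longlongrightarrow> 1 / 1) (left_end_filter a)"
    by (rule tendsto_divide[OF phi_over_u phi_over_u]) simp
  moreover have "eventually (\<lambda>x. (phi a u v r lam z1 x / complex_of_real (u x)) / (phi a u v r lam z2 x / complex_of_real (u x))
      = phi a u v r lam z1 x / phi a u v r lam z2 x) (left_end_filter a)"
    using near_ev
  proof eventually_elim
    case (elim x)
    then have "u x \<noteq> 0" using near_nz by auto
    then show ?case by (simp add: divide_divide_eq_left field_simps)
  qed
  ultimately show ?thesis by (simp add: Lim_transform_eventually)
qed

end

lemma L1_add:
  assumes "L1_loc I f" "L1_loc I g"
  shows "L1_loc I (\<lambda>x. f x + g x)"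
  using assms unfolding L1_loc_def by (auto intro: set_integral_add)

lemma L1_cmult:
  assumes "L1_loc I f"
  shows "L1_loc I (\<lambda>x. k * f x)"
  using assms unfolding L1_loc_def by (auto intro: set_integrable_mult_right)

lemma L1_abs:
  assumes "L1_loc I f"
  shows "L1_loc I (\<lambda>x. \<bar>f x\<bar>)"
  using assms unfolding L1_loc_def by (auto intro: set_integrable_abs)

lemma int_bound:
  fixes f R :: "real \<Rightarrow> real"
  assumes "f integrable_on {s..t}" "R integrable_on {y..y1}" "{s..t} \<subseteq> {y..y1}"
    "\<forall>x\<in>{y..y1}. R x \<ge> 0" "\<forall>x\<in>{s..t}. \<bar>f x\<bar> \<le> K * R x" "K \<ge> 0"
  shows "\<bar>integral {s..t} f\<bar> \<le> K * integral {y..y1} R"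
proof (cases "s \<le> t")
  case False
  then have "{s..t} = {}" by simp
  moreover have "integral {y..y1} R \<ge> 0" using assms(4) by (intro integral_nonneg[OF assms(2)]) auto
  ultimately show ?thesis using assms(6) by simp
next
  case True
  have Rst: "R integrable_on {s..t}" using integrable_on_subinterval[OF assms(2) assms(3)] .
  have "\<bar>integral {s..t} f\<bar> \<le> integral {s..t} (\<lambda>x. K * R x)"
    using integral_norm_bound_integral[OF assms(1) integrable_cmul[OF Rst, of K]] assms(5) by simp
  also have "\<dots> = K * integral {s..t} R" by simp
  also have "\<dots> \<le> K * integral {y..y1} R"
    using integral_subset_le[OF assms(3) Rst assms(2,4)] assms(6) by (intro mult_left_mono) auto
  finally show ?thesis .
qed

locale SLB = SL +
  fixes mu :: real and f f1 :: "real \<Rightarrow> real"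
  assumes fsol: "is_sol a b p q r mu f f1"
begin

lemma f_AC: "AC_loc (ivl a b) f" and f1_AC: "AC_loc (ivl a b) f1"
  and f_der: "AE x in lebesgue. x \<in> ivl a b \<longrightarrow> (f has_real_derivative f1 x / p x) (at x)"
  and f1_der: "AE x in lebesgue. x \<in> ivl a b \<longrightarrow> (f1 has_real_derivative (q x - mu * r x) * f x) (at x)"
  using sol_real[OF fsol] by auto

lemma fcont: "s \<in> ivl a b \<Longrightarrow> t \<in> ivl a b \<Longrightarrow> continuous_on {s..t} f"
  "s \<in> ivl a b \<Longrightarrow> t \<in> ivl a b \<Longrightarrow> continuous_on {s..t} f1"
  using AC_loc_cont_on f_AC f1_AC by blast+

definition A where "A x = v x * f1 x - v1 x * f x"
definition B where "B x = f x * u1 x - f1 x * u x"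
definition dA where "dA x = ((lam - mu) * v x * f x) * r x"
definition dB where "dB x = ((mu - lam) * u x * f x) * r x"

lemma fAB: "x \<in> ivl a b \<Longrightarrow> f x = A x * u x + B x * v x"
proof -
  assume "x \<in> ivl a b"
  then have W: "v x * u1 x - v1 x * u x = 1" using wronskian by auto
  have "A x * u x + B x * v x = f x * (v x * u1 x - v1 x * u x)" unfolding A_def B_def by (simp add: algebra_simps)
  then show ?thesis using W by simp
qed

lemma A_AC: "AC_loc (ivl a b) A"
  unfolding A_def[abs_def] by (intro AC_loc_diff AC_loc_mult v_AC f1_AC v1_AC f_AC)
lemma B_AC: "AC_loc (ivl a b) B"
  unfolding B_def[abs_def] by (intro AC_loc_diff AC_loc_mult u_AC f1_AC u1_AC f_AC)

lemma A_der: "AE x in lebesgue. x \<in> ivl a b \<longrightarrow> (A has_real_derivative dA x) (at x)"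
  using v_der v1_der f_der f1_der ppos
proof eventually_elim
  case (elim x)
  show ?case
  proof
    assume xI: "x \<in> ivl a b"
    have px: "p x \<noteq> 0" using elim xI by auto
    have d1: "((\<lambda>x. v x * f1 x) has_real_derivative (v1 x / p x) * f1 x + ((q x - mu * r x) * f x) * v x) (at x)"
      by (rule DERIV_mult) (use elim xI in auto)
    have d2: "((\<lambda>x. v1 x * f x) has_real_derivative ((q x - lam * r x) * v x) * f x + (f1 x / p x) * v1 x) (at x)"
      by (rule DERIV_mult) (use elim xI in auto)
    have "(A has_real_derivative ((v1 x / p x) * f1 x + ((q x - mu * r x) * f x) * v x)
        - (((q x - lam * r x) * v x) * f x + (f1 x / p x) * v1 x)) (at x)"
      unfolding A_def[abs_def] by (rule DERIV_diff[OF d1 d2])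
    moreover have "((v1 x / p x) * f1 x + ((q x - mu * r x) * f x) * v x)
        - (((q x - lam * r x) * v x) * f x + (f1 x / p x) * v1 x) = dA x"
      unfolding dA_def by (simp add: algebra_simps)
    ultimately show "(A has_real_derivative dA x) (at x)" by simp
  qed
qed

lemma B_der: "AE x in lebesgue. x \<in> ivl a b \<longrightarrow> (B has_real_derivative dB x) (at x)"
  using u_der u1_der f_der f1_der ppos
proof eventually_elim
  case (elim x)
  show ?case
  proof
    assume xI: "x \<in> ivl a b"
    have d1: "((\<lambda>x. f x * u1 x) has_real_derivative (f1 x / p x) * u1 x + ((q x - lam * r x) * u x) * f x) (at x)"
      by (rule DERIV_mult) (use elim xI in auto)
    have d2: "((\<lambda>x. f1 x * u x) has_real_derivative ((q x - mu * r x) * f x) * u x + (u1 x / p x) * f1 x) (at x)"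
      by (rule DERIV_mult) (use elim xI in auto)
    have "(B has_real_derivative ((f1 x / p x) * u1 x + ((q x - lam * r x) * u x) * f x)
        - (((q x - mu * r x) * f x) * u x + (u1 x / p x) * f1 x)) (at x)"
      unfolding B_def[abs_def] by (rule DERIV_diff[OF d1 d2])
    moreover have "((f1 x / p x) * u1 x + ((q x - lam * r x) * u x) * f x)
        - (((q x - mu * r x) * f x) * u x + (u1 x / p x) * f1 x) = dB x"
      unfolding dB_def by (simp add: algebra_simps)
    ultimately show "(B has_real_derivative dB x) (at x)" by simp
  qed
qed

lemma dA_int: "s \<in> ivl a b \<Longrightarrow> t \<in> ivl a b \<Longrightarrow> dA absolutely_integrable_on {s..t}"
  unfolding dA_def[abs_def]
  by (rule int_prod[OF L1r]) (auto intro!: continuous_intros cont_on fcont)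

lemma dB_int: "s \<in> ivl a b \<Longrightarrow> t \<in> ivl a b \<Longrightarrow> dB absolutely_integrable_on {s..t}"
  unfolding dB_def[abs_def]
  by (rule int_prod[OF L1r]) (auto intro!: continuous_intros cont_on fcont)

lemma A_ftc: "s \<in> ivl a b \<Longrightarrow> t \<in> ivl a b \<Longrightarrow> s \<le> t \<Longrightarrow> A t - A s = integral {s..t} dA"
proof -
  assume st: "s \<in> ivl a b" "t \<in> ivl a b" "s \<le> t"
  have "(dA has_integral (A t - A s)) {s..t}"
    by (rule FTC_AC[OF st(3) AC_loc_on[OF A_AC st]])
       (use dA_int[OF st(1,2)] set_lebesgue_integral_eq_integral(1) AE_ivl_sub[OF A_der st(1,2)] in auto)
  then show ?thesis by (simp add: integral_unique)
qed

lemma B_ftc: "s \<in> ivl a b \<Longrightarrow> t \<in> ivl a b \<Longrightarrow> s \<le> t \<Longrightarrow> B t - B s = integral {s..t} dB"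
proof -
  assume st: "s \<in> ivl a b" "t \<in> ivl a b" "s \<le> t"
  have "(dB has_integral (B t - B s)) {s..t}"
    by (rule FTC_AC[OF st(3) AC_loc_on[OF B_AC st]])
       (use dB_int[OF st(1,2)] set_lebesgue_integral_eq_integral(1) AE_ivl_sub[OF B_der st(1,2)] in auto)
  then show ?thesis by (simp add: integral_unique)
qed

end

context SLB begin

lemma usq_le:
  assumes "near s" "u s / v s \<le> W"
  shows "\<bar>u s\<bar> * \<bar>u s\<bar> \<le> \<bar>u s * v s\<bar> * W"
proof -
  have ws: "u s / v s > 0" using w_pos assms(1) by simp
  have vs: "v s \<noteq> 0" using near_nz assms(1) by simp
  have "u s * u s = (u s * v s) * (u s / v s)" using vs by (simp add: field_simps)
  moreover have "u s * v s > 0"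
  proof -
    have "u s * v s = (u s / v s) * (v s * v s)" using vs by (simp add: field_simps)
    moreover have "v s * v s > 0" using vs by (metis power2_eq_square zero_less_power2)
    ultimately show ?thesis using ws mult_pos_pos by metis
  qed
  ultimately have "\<bar>u s\<bar> * \<bar>u s\<bar> = \<bar>u s * v s\<bar> * (u s / v s)" using ws by (simp add: abs_mult[symmetric])
  also have "\<dots> \<le> \<bar>u s * v s\<bar> * W" using assms(2) by (intro mult_left_mono) auto
  finally show ?thesis .
qed

lemma R_int: "s \<in> ivl a b \<Longrightarrow> t \<in> ivl a b \<Longrightarrow> (\<lambda>x. \<bar>u x * v x * r x\<bar>) integrable_on {s..t}"
proof -
  assume st: "s \<in> ivl a b" "t \<in> ivl a b"
  have "(\<lambda>x. \<bar>u x * v x\<bar> * \<bar>r x\<bar>) absolutely_integrable_on {s..t}"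
    by (rule int_prod[OF L1_abs[OF L1r] st]) (auto intro!: continuous_intros cont_on st)
  then show ?thesis by (simp add: abs_mult set_lebesgue_integral_eq_integral(1))
qed

lemma J_le_I:
  assumes "near y" "y1 < x" "x \<le> c" "near y1" "y \<le> y1"
  shows "integral {y..y1} (\<lambda>x. \<bar>u x * v x * r x\<bar>) \<le> Iab x"
proof -
  have yI: "y \<in> ivl a b" and y1I: "y1 \<in> ivl a b" using near_ivl assms by auto
  have ai: "(\<lambda>x. \<bar>u x * v x\<bar> * \<bar>r x\<bar>) absolutely_integrable_on {y..y1}"
    by (rule int_prod[OF L1_abs[OF L1r] yI y1I]) (auto intro!: continuous_intros cont_on yI y1I)
  then have ai': "(\<lambda>x. \<bar>u x * v x * r x\<bar>) absolutely_integrable_on {y..y1}" by (simp add: abs_mult)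
  have "integral {y..y1} (\<lambda>x. \<bar>u x * v x * r x\<bar>) = set_lebesgue_integral lebesgue {y..y1} (\<lambda>x. \<bar>u x * v x * r x\<bar>)"
    by (rule int_eq_lint[OF ai'])
  also have "\<dots> \<le> Iab x"
  proof -
    have sub: "{y..y1} \<subseteq> {t. a < ereal t \<and> t < x}" using assms unfolding near_def
      by (auto intro: less_le_trans)
    have i2: "set_integrable lebesgue {t. a < ereal t \<and> t < x} (\<lambda>t. \<bar>u t * v t * r t\<bar>)" using Iint assms(3) by simp
    show ?thesis unfolding Iab_def set_lebesgue_integral_def
      by (rule integral_mono) (use ai' i2 sub in \<open>auto simp: set_integrable_def indicator_def\<close>)
  qed
  finally show ?thesis .
qed

lemma est_zero:
  assumes ny: "near y" and ny1: "near y1" and yy1: "y < y1" and By: "B y = 0" and fy1: "f y1 = 0"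
    and y1c2: "y1 < c2" and c2c: "c2 \<le> c" and small: "3 * \<bar>mu - lam\<bar> * Iab c2 < 1"
  shows "\<forall>t\<in>{y..y1}. f t = 0"
proof -
  define \<nu> where "\<nu> = \<bar>mu - lam\<bar>"
  have nu0: "\<nu> \<ge> 0" unfolding \<nu>_def by simp
  have yI: "y \<in> ivl a b" and y1I: "y1 \<in> ivl a b" using near_ivl ny ny1 by auto
  have nt: "\<And>t. t \<in> {y..y1} \<Longrightarrow> near t" using near_between[OF ny ny1] by auto
  have tI: "\<And>t. t \<in> {y..y1} \<Longrightarrow> t \<in> ivl a b" using nt near_ivl by blast
  define g where "g t = f t / u t" for t
  have gc: "continuous_on {y..y1} (\<lambda>t. \<bar>g t\<bar>)"
    unfolding g_def using fcont(1)[OF yI y1I] cont_on(1)[OF yI y1I] near_nz nt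
    by (intro continuous_intros) auto
  obtain ts where ts: "ts \<in> {y..y1}" "\<forall>t\<in>{y..y1}. \<bar>g t\<bar> \<le> \<bar>g ts\<bar>"
    using continuous_attains_sup[OF compact_Icc _ gc] yy1 by auto
  define M where "M = \<bar>g ts\<bar>"
  have M0: "M \<ge> 0" unfolding M_def by simp
  have fM: "\<bar>f t\<bar> \<le> M * \<bar>u t\<bar>" if "t \<in> {y..y1}" for t
  proof -
    have "u t \<noteq> 0" using near_nz nt that by auto
    then have "\<bar>f t\<bar> = \<bar>g t\<bar> * \<bar>u t\<bar>" unfolding g_def by (simp add: abs_div)
    then show ?thesis using ts(2) that unfolding M_def by (simp add: mult_right_mono)
  qed
  define R where "R x = \<bar>u x * v x * r x\<bar>" for x
  define J where "J = integral {y..y1} R"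
  have Ri: "R integrable_on {y..y1}" unfolding R_def using R_int[OF yI y1I] .
  have R0: "\<forall>x\<in>{y..y1}. R x \<ge> 0" unfolding R_def by simp
  have J0: "J \<ge> 0" unfolding J_def using R0 by (intro integral_nonneg[OF Ri]) auto
  have JI: "J \<le> Iab c2" unfolding J_def R_def by (rule J_le_I[OF ny y1c2 c2c ny1]) (use yy1 in simp)
  have dBb: "\<bar>dB s\<bar> \<le> \<nu> * M * W * R s" if "s \<in> {y..y1}" "u s / v s \<le> W" for s W
  proof -
    have "\<bar>dB s\<bar> = \<nu> * \<bar>u s\<bar> * \<bar>f s\<bar> * \<bar>r s\<bar>" unfolding dB_def \<nu>_def by (simp add: abs_mult)
    also have "\<dots> \<le> \<nu> * \<bar>u s\<bar> * (M * \<bar>u s\<bar>) * \<bar>r s\<bar>"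
      using fM[OF that(1)] nu0 by (intro mult_right_mono mult_left_mono) auto
    also have "\<dots> = \<nu> * M * (\<bar>u s\<bar> * \<bar>u s\<bar>) * \<bar>r s\<bar>" by (simp add: algebra_simps)
    also have "\<dots> \<le> \<nu> * M * (\<bar>u s * v s\<bar> * W) * \<bar>r s\<bar>"
      using usq_le[OF nt[OF that(1)] that(2)] nu0 M0 by (intro mult_right_mono mult_left_mono) auto
    also have "\<dots> = \<nu> * M * W * R s" unfolding R_def by (simp add: abs_mult algebra_simps)
    finally show ?thesis .
  qed
  have dAb: "\<bar>dA s\<bar> \<le> \<nu> * M * R s" if "s \<in> {y..y1}" for s
  proof -
    have "\<bar>dA s\<bar> = \<nu> * \<bar>v s\<bar> * \<bar>f s\<bar> * \<bar>r s\<bar>" unfolding dA_def \<nu>_def by (simp add: abs_mult abs_minus_commute)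
    also have "\<dots> \<le> \<nu> * \<bar>v s\<bar> * (M * \<bar>u s\<bar>) * \<bar>r s\<bar>"
      using fM[OF that] nu0 by (intro mult_right_mono mult_left_mono) auto
    also have "\<dots> = \<nu> * M * R s" unfolding R_def by (simp add: abs_mult algebra_simps)
    finally show ?thesis .
  qed
  have key: "\<bar>g t\<bar> \<le> 3 * \<nu> * M * J" if t: "t \<in> {y..y1}" for t
  proof -
    have tI': "t \<in> ivl a b" using tI[OF t] .
    have ntt: "near t" using nt[OF t] .
    have wt: "u t / v t > 0" using w_pos[OF ntt] .
    have wy1: "u y1 / v y1 > 0" using w_pos[OF ny1] .
    have wty1: "u t / v t \<le> u y1 / v y1" using w_mono[OF ntt ny1] t by auto
    have ut: "u t \<noteq> 0" and vt: "v t \<noteq> 0" using near_nz[OF ntt] by auto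
    have uy1: "u y1 \<noteq> 0" and vy1: "v y1 \<noteq> 0" using near_nz[OF ny1] by auto
    have Bt: "B t = integral {y..t} dB" using B_ftc[OF yI tI'] t By by simp
    have Bt1: "B y1 - B t = integral {t..y1} dB" using B_ftc[OF tI' y1I] t by simp
    have At1: "A y1 - A t = integral {t..y1} dA" using A_ftc[OF tI' y1I] t by simp
    have Ay1: "A y1 = - B y1 * v y1 / u y1"
    proof -
      have "0 = A y1 * u y1 + B y1 * v y1" using fAB[OF y1I] fy1 by simp
      then show ?thesis using uy1 by (simp add: field_simps)
    qed
    have gt: "g t = A t + B t * v t / u t" using fAB[OF tI'] ut unfolding g_def by (simp add: field_simps)
    have geq: "g t = (v t / u t - v y1 / u y1) * B t - (v y1 / u y1) * (B y1 - B t) - (A y1 - A t)"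
      unfolding gt using Ay1 by (simp add: algebra_simps)
    have dBi: "dB integrable_on {y..y1}" using dB_int[OF yI y1I] set_lebesgue_integral_eq_integral(1) by blast
    have dAi: "dA integrable_on {y..y1}" using dA_int[OF yI y1I] set_lebesgue_integral_eq_integral(1) by blast
    have b1: "\<bar>B t\<bar> \<le> (\<nu> * M * (u t / v t)) * J"
      unfolding Bt J_def
    proof (rule int_bound[OF integrable_on_subinterval[OF dBi] Ri])
      show "{y..t} \<subseteq> {y..y1}" using t by auto
      then show "{y..t} \<subseteq> {y..y1}" .
      show "\<forall>x\<in>{y..y1}. 0 \<le> R x" using R0 .
      show "\<forall>x\<in>{y..t}. \<bar>dB x\<bar> \<le> \<nu> * M * (u t / v t) * R x"
      proof
        fix s assume s: "s \<in> {y..t}"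
        then have "s \<in> {y..y1}" using t by auto
        moreover have "u s / v s \<le> u t / v t" using w_mono[OF nt[OF \<open>s \<in> {y..y1}\<close>] ntt] s by auto
        ultimately show "\<bar>dB s\<bar> \<le> \<nu> * M * (u t / v t) * R s" using dBb by blast
      qed
      show "0 \<le> \<nu> * M * (u t / v t)" using nu0 M0 wt by (intro mult_nonneg_nonneg) auto
    qed
    have b2: "\<bar>B y1 - B t\<bar> \<le> (\<nu> * M * (u y1 / v y1)) * J"
      unfolding Bt1 J_def
    proof (rule int_bound[OF integrable_on_subinterval[OF dBi] Ri])
      show "{t..y1} \<subseteq> {y..y1}" using t by auto
      then show "{t..y1} \<subseteq> {y..y1}" .
      show "\<forall>x\<in>{y..y1}. 0 \<le> R x" using R0 .
      show "\<forall>x\<in>{t..y1}. \<bar>dB x\<bar> \<le> \<nu> * M * (u y1 / v y1) * R x"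
      proof
        fix s assume s: "s \<in> {t..y1}"
        then have "s \<in> {y..y1}" using t by auto
        moreover have "u s / v s \<le> u y1 / v y1" using w_mono[OF nt[OF \<open>s \<in> {y..y1}\<close>] ny1] s by auto
        ultimately show "\<bar>dB s\<bar> \<le> \<nu> * M * (u y1 / v y1) * R s" using dBb by blast
      qed
      show "0 \<le> \<nu> * M * (u y1 / v y1)" using nu0 M0 wy1 by (intro mult_nonneg_nonneg) auto
    qed
    have b3: "\<bar>A y1 - A t\<bar> \<le> (\<nu> * M) * J"
      unfolding At1 J_def
    proof (rule int_bound[OF integrable_on_subinterval[OF dAi] Ri])
      show "{t..y1} \<subseteq> {y..y1}" using t by auto
      then show "{t..y1} \<subseteq> {y..y1}" .
      show "\<forall>x\<in>{y..y1}. 0 \<le> R x" using R0 .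
      show "\<forall>x\<in>{t..y1}. \<bar>dA x\<bar> \<le> \<nu> * M * R x" using dAb t by auto
      show "0 \<le> \<nu> * M" using nu0 M0 by simp
    qed
    have c1: "0 \<le> v t / u t - v y1 / u y1" and c1': "v t / u t - v y1 / u y1 \<le> v t / u t"
    proof -
      have "v t / u t = 1 / (u t / v t)" "v y1 / u y1 = 1 / (u y1 / v y1)" by simp_all
      moreover have "1 / (u y1 / v y1) \<le> 1 / (u t / v t)"
      proof -
        have pp: "0 < (u y1 / v y1) * (u t / v t)" using mult_pos_pos[OF wy1 wt] .
        show ?thesis by (rule divide_left_mono[OF wty1 _ pp]) simp
      qed
      moreover have "1 / (u y1 / v y1) > 0" using wy1 by (metis zero_less_divide_1_iff)
      ultimately show "0 \<le> v t / u t - v y1 / u y1" "v t / u t - v y1 / u y1 \<le> v t / u t" by auto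
    qed
    have t1: "\<bar>(v t / u t - v y1 / u y1) * B t\<bar> \<le> \<nu> * M * J"
    proof -
      have "\<bar>(v t / u t - v y1 / u y1) * B t\<bar> = \<bar>v t / u t - v y1 / u y1\<bar> * \<bar>B t\<bar>" by (rule abs_mult)
      also have "\<bar>v t / u t - v y1 / u y1\<bar> = v t / u t - v y1 / u y1" using c1 by (rule abs_of_nonneg)
      finally have "\<bar>(v t / u t - v y1 / u y1) * B t\<bar> = (v t / u t - v y1 / u y1) * \<bar>B t\<bar>" .
      also have "\<dots> \<le> (v t / u t) * ((\<nu> * M * (u t / v t)) * J)"
        using c1 c1' b1 by (intro mult_mono) auto
      also have "\<dots> = \<nu> * M * J" using ut vt by (simp add: field_simps)
      finally show ?thesis .
    qed
    have t2: "\<bar>(v y1 / u y1) * (B y1 - B t)\<bar> \<le> \<nu> * M * J"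
    proof -
      have vu: "v y1 / u y1 > 0" using wy1 by (simp add: zero_less_divide_iff) blast
      have "\<bar>(v y1 / u y1) * (B y1 - B t)\<bar> = \<bar>v y1 / u y1\<bar> * \<bar>B y1 - B t\<bar>" by (rule abs_mult)
      also have "\<bar>v y1 / u y1\<bar> = v y1 / u y1" using vu by (rule abs_of_pos)
      finally have "\<bar>(v y1 / u y1) * (B y1 - B t)\<bar> = (v y1 / u y1) * \<bar>B y1 - B t\<bar>" .
      also have "\<dots> \<le> (v y1 / u y1) * ((\<nu> * M * (u y1 / v y1)) * J)"
        using vu b2 by (intro mult_left_mono) auto
      also have "\<dots> = \<nu> * M * J" using uy1 vy1 by (simp add: field_simps)
      finally show ?thesis .
    qed
    have "\<bar>g t\<bar> \<le> \<bar>(v t / u t - v y1 / u y1) * B t\<bar> + \<bar>(v y1 / u y1) * (B y1 - B t)\<bar> + \<bar>A y1 - A t\<bar>"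
      unfolding geq by linarith
    also have "\<dots> \<le> \<nu> * M * J + \<nu> * M * J + \<nu> * M * J" using t1 t2 b3 by linarith
    also have "\<dots> = 3 * \<nu> * M * J" by simp
    finally show ?thesis .
  qed
  have "M \<le> 3 * \<nu> * M * J" using key[OF ts(1)] unfolding M_def .
  also have "\<dots> \<le> 3 * \<nu> * M * Iab c2" using JI nu0 M0 by (intro mult_left_mono) auto
  finally have "M * 1 \<le> M * (3 * \<nu> * Iab c2)" by (simp add: algebra_simps)
  then have M00: "M = 0"
  proof -
    assume h: "M * 1 \<le> M * (3 * \<nu> * Iab c2)"
    show "M = 0"
    proof (rule ccontr)
      assume "M \<noteq> 0"
      then have "M > 0" using M0 by simp
      then have "1 \<le> 3 * \<nu> * Iab c2" using h mult_le_cancel_left_pos by blast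
      then show False using small unfolding \<nu>_def by simp
    qed
  qed
  show ?thesis
  proof
    fix t assume t: "t \<in> {y..y1}"
    show "f t = 0" using fM[OF t] M00 by simp
  qed
qed

end

context SLB begin

lemma B_cont: "s \<in> ivl a b \<Longrightarrow> t \<in> ivl a b \<Longrightarrow> continuous_on {s..t} B"
  unfolding B_def[abs_def] by (intro continuous_intros fcont cont_on) auto

lemma B_zero:
  assumes nx1: "near x1" and ny1: "near y1" and xy: "x1 < y1" and fx1: "f x1 = 0" and fy1: "f y1 = 0"
  shows "\<exists>y. x1 \<le> y \<and> y < y1 \<and> B y = 0"
proof (rule ccontr)
  assume H: "\<not> ?thesis"
  then have H': "\<And>y. x1 \<le> y \<Longrightarrow> y < y1 \<Longrightarrow> B y \<noteq> 0" by blast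
  have x1I: "x1 \<in> ivl a b" and y1I: "y1 \<in> ivl a b" using near_ivl nx1 ny1 by auto
  have nt: "\<And>t. t \<in> {x1..y1} \<Longrightarrow> near t" using near_between[OF nx1 ny1] by auto
  have unz: "\<forall>x\<in>{x1..y1}. u x \<noteq> 0" using nt near_nz by blast
  have ac: "abs_cont_on x1 y1 (\<lambda>x. f x / u x)"
    using AC_div[OF AC_loc_on[OF f_AC x1I y1I] AC_loc_on[OF u_AC x1I y1I] unz] xy by simp
  define k where "k x = (- B x / (u x * u x)) * (1 / p x)" for x
  have ki: "k absolutely_integrable_on {x1..y1}"
    unfolding k_def
    by (rule int_prod[OF L1p x1I y1I]) (use unz in \<open>auto intro!: continuous_intros B_cont cont_on x1I y1I\<close>)
  have der: "AE x in lebesgue. x \<in> {x1..y1} \<longrightarrow> ((\<lambda>x. f x / u x) has_real_derivative k x) (at x)"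
  proof -
    have "AE x in lebesgue. x \<in> ivl a b \<longrightarrow> (f has_real_derivative f1 x / p x) (at x)
        \<and> (u has_real_derivative u1 x / p x) (at x) \<and> p x > 0"
      using f_der u_der ppos by eventually_elim auto
    then show ?thesis
    proof (rule eventually_mono)
      fix x assume Hx: "x \<in> ivl a b \<longrightarrow> (f has_real_derivative f1 x / p x) (at x)
        \<and> (u has_real_derivative u1 x / p x) (at x) \<and> p x > 0"
      show "x \<in> {x1..y1} \<longrightarrow> ((\<lambda>x. f x / u x) has_real_derivative k x) (at x)"
      proof
        assume x: "x \<in> {x1..y1}"
        then have xI: "x \<in> ivl a b" using ivl_sub[OF x1I y1I] by auto
        have ux: "u x \<noteq> 0" using unz x by auto
        have px: "p x > 0" using Hx xI by auto
        have df: "(f has_real_derivative f1 x / p x) (at x)" and du: "(u has_real_derivative u1 x / p x) (at x)"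
          using Hx xI by auto
        have "((\<lambda>x. f x / u x) has_real_derivative ((f1 x / p x) * u x - f x * (u1 x / p x)) / (u x * u x)) (at x)"
          using DERIV_divide[OF df du ux] .
        moreover have "((f1 x / p x) * u x - f x * (u1 x / p x)) / (u x * u x) = k x"
          unfolding k_def B_def using px ux by (simp add: field_simps)
        ultimately show "((\<lambda>x. f x / u x) has_real_derivative k x) (at x)" by simp
      qed
    qed
  qed
  have "(k has_integral (f y1 / u y1 - f x1 / u x1)) {x1..y1}"
    using FTC_AC[OF less_imp_le[OF xy] ac _ der] ki by (simp add: set_lebesgue_integral_eq_integral(1))
  then have I0: "integral {x1..y1} k = 0" using fx1 fy1 by (simp add: integral_unique)
  have Bx1: "B x1 \<noteq> 0" using H' xy by simp
  define \<sigma> where "\<sigma> = (if B x1 > 0 then 1 else -1::real)"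
  have s0: "\<sigma> * B x1 > 0" using Bx1 unfolding \<sigma>_def by auto
  have spos: "\<sigma> * B x > 0" if x: "x1 \<le> x" "x < y1" for x
  proof (rule ccontr)
    assume "\<not> \<sigma> * B x > 0"
    then have le: "\<sigma> * B x \<le> 0" by simp
    have xI: "x \<in> ivl a b" using ivl_convex[OF x1I y1I] x by auto
    have "continuous_on {x1..x} (\<lambda>t. \<sigma> * B t)" using B_cont[OF x1I xI] by (intro continuous_intros)
    then obtain z where z: "x1 \<le> z" "z \<le> x" "\<sigma> * B z = 0"
      using IVT2'[of "\<lambda>t. \<sigma> * B t" x 0 x1] le s0 x by auto
    have "\<sigma> \<noteq> 0" unfolding \<sigma>_def by simp
    then have "B z = 0" using z(3) by simp
    then show False using H'[of z] z x by simp
  qed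
  have ki': "(\<lambda>x. - \<sigma> * k x) absolutely_integrable_on {x1..y1}"
    using ki by (rule set_integrable_mult_right)
  have ae: "AE x in lebesgue. x \<in> {x1..y1} \<longrightarrow> 0 < - \<sigma> * k x"
  proof -
    have ny: "{y1} \<in> null_sets lebesgue" using negligible_sing negligible_iff_null_sets by blast
    have "AE x in lebesgue. x \<in> ivl a b \<longrightarrow> p x > 0" using ppos .
    moreover have "AE x in lebesgue. x \<notin> {y1}" using AE_not_in[OF ny] .
    ultimately show ?thesis
    proof eventually_elim
      case (elim x)
      show ?case
      proof
        assume x: "x \<in> {x1..y1}"
        then have xI: "x \<in> ivl a b" using ivl_sub[OF x1I y1I] by auto
        have px: "p x > 0" using elim xI by auto
        have xy1: "x < y1" using x elim by auto
        have sb: "\<sigma> * B x > 0" using spos x xy1 by auto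
        have ux: "u x \<noteq> 0" using unz x by auto
        have uu: "u x * u x > 0" using ux by (metis power2_eq_square zero_less_power2)
        have "- \<sigma> * k x = (\<sigma> * B x) / (u x * u x) * (1 / p x)" unfolding k_def by simp
        also have "\<dots> > 0" using sb uu px by simp
        finally show "0 < - \<sigma> * k x" .
      qed
    qed
  qed
  have "integral {x1..y1} (\<lambda>x. - \<sigma> * k x) > 0" by (rule int_pos_AE[OF ki' xy ae])
  moreover have "integral {x1..y1} (\<lambda>x. - \<sigma> * k x) = - \<sigma> * integral {x1..y1} k" by simp
  ultimately show False using I0 by simp
qed

lemma L1qr: "L1_loc (ivl a b) (\<lambda>x. q x - mu * r x)"
proof -
  have "L1_loc (ivl a b) (\<lambda>x. q x + (- mu) * r x)" by (intro L1_add L1q L1_cmult L1r)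
  then show ?thesis by simp
qed

lemma f_ftc:
  assumes "s \<in> ivl a b" "t \<in> ivl a b" "s \<le> t"
  shows "f t - f s = integral {s..t} (\<lambda>x. f1 x * (1 / p x))"
    "(\<lambda>x. f1 x * (1 / p x)) absolutely_integrable_on {s..t}"
proof -
  show ai: "(\<lambda>x. f1 x * (1 / p x)) absolutely_integrable_on {s..t}"
    by (rule int_prod[OF L1p assms(1,2)]) (rule fcont(2)[OF assms(1,2)])
  have "AE x in lebesgue. x \<in> {s..t} \<longrightarrow> (f has_real_derivative f1 x * (1 / p x)) (at x)"
    using AE_ivl_sub[OF f_der assms(1,2)] by simp
  then have "((\<lambda>x. f1 x * (1 / p x)) has_integral (f t - f s)) {s..t}"
    using FTC_AC[OF assms(3) AC_loc_on[OF f_AC assms]] ai by (simp add: set_lebesgue_integral_eq_integral(1))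
  then show "f t - f s = integral {s..t} (\<lambda>x. f1 x * (1 / p x))" by (simp add: integral_unique)
qed

lemma f1_ftc:
  assumes "s \<in> ivl a b" "t \<in> ivl a b" "s \<le> t"
  shows "f1 t - f1 s = integral {s..t} (\<lambda>x. f x * (q x - mu * r x))"
    "(\<lambda>x. f x * (q x - mu * r x)) absolutely_integrable_on {s..t}"
proof -
  show ai: "(\<lambda>x. f x * (q x - mu * r x)) absolutely_integrable_on {s..t}"
    by (rule int_prod[OF L1qr assms(1,2)]) (rule fcont(1)[OF assms(1,2)])
  have "AE x in lebesgue. x \<in> {s..t} \<longrightarrow> (f1 has_real_derivative f x * (q x - mu * r x)) (at x)"
    using AE_ivl_sub[OF f1_der assms(1,2)] by (simp add: mult.commute)
  then have "((\<lambda>x. f x * (q x - mu * r x)) has_integral (f1 t - f1 s)) {s..t}"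
    using FTC_AC[OF assms(3) AC_loc_on[OF f1_AC assms]] ai by (simp add: set_lebesgue_integral_eq_integral(1))
  then show "f1 t - f1 s = integral {s..t} (\<lambda>x. f x * (q x - mu * r x))" by (simp add: integral_unique)
qed

end

context SLB begin

lemma local_zero:
  assumes sI: "s \<in> ivl a b" and fs: "f s = 0" and f1s: "f1 s = 0"
  shows "\<exists>h>0. s + h \<in> ivl a b \<and> (\<forall>t\<in>{s..s+h}. f t = 0 \<and> f1 t = 0)"
proof -
  obtain c' d where d: "d \<in> ivl a b" "s < d" using ivl_between[OF sI] by blast
  define K where "K x = \<bar>1 / p x\<bar> + \<bar>q x - mu * r x\<bar>" for x
  have Ki: "K integrable_on {s..d}"
  proof -
    have "L1_loc (ivl a b) K" unfolding K_def[abs_def] by (intro L1_add L1_abs L1p L1qr)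
    then have "K absolutely_integrable_on {s..d}" using sI d less_imp_le unfolding L1_loc_def by blast
    then show ?thesis by (simp add: set_lebesgue_integral_eq_integral(1))
  qed
  have K0: "\<forall>x. K x \<ge> 0" unfolding K_def by simp
  have Hc: "continuous_on {s..d} (\<lambda>t. integral {s..t} K)" by (rule indefinite_integral_continuous_1[OF Ki])
  have sS: "s \<in> {s..d}" using d by simp
  obtain \<delta> where \<delta>: "\<delta> > 0" "\<forall>t\<in>{s..d}. dist t s < \<delta> \<longrightarrow> dist (integral {s..t} K) (integral {s..s} K) < 1/4"
    using Hc[unfolded continuous_on_iff, rule_format, OF sS, of "1/4"] by auto
  define h where "h = min (\<delta>/2) (d - s)"
  have h0: "h > 0" unfolding h_def using \<delta> d by simp
  have shd: "s + h \<le> d" unfolding h_def by simp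
  have shI: "s + h \<in> ivl a b" using ivl_convex[OF sI d(1)] h0 shd by simp
  have Hsmall: "integral {s..s+h} K < 1/4"
  proof -
    have "dist (s+h) s < \<delta>" using h0 \<delta> unfolding h_def by (simp add: dist_real_def)
    then have "dist (integral {s..s+h} K) (integral {s..s} K) < 1/4" using \<delta>(2) h0 shd by auto
    then show ?thesis by (simp add: dist_real_def)
  qed
  have Ki2: "K integrable_on {s..s+h}" using integrable_on_subinterval[OF Ki] shd by simp
  define m where "m t = \<bar>f t\<bar> + \<bar>f1 t\<bar>" for t
  have mc: "continuous_on {s..s+h} m" unfolding m_def[abs_def]
    by (intro continuous_intros fcont sI shI)
  obtain ts where ts: "ts \<in> {s..s+h}" "\<forall>t\<in>{s..s+h}. m t \<le> m ts"
    using continuous_attains_sup[OF compact_Icc _ mc] h0 by auto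
  define Mx where "Mx = m ts"
  have Mx0: "Mx \<ge> 0" unfolding Mx_def m_def by simp
  have bnd: "m t \<le> 2 * Mx * integral {s..s+h} K" if t: "t \<in> {s..s+h}" for t
  proof -
    have tI: "t \<in> ivl a b" using ivl_convex[OF sI shI] t by auto
    have st: "s \<le> t" using t by simp
    have e1: "f t = integral {s..t} (\<lambda>x. f1 x * (1 / p x))" using f_ftc(1)[OF sI tI st] fs by simp
    have e2: "f1 t = integral {s..t} (\<lambda>x. f x * (q x - mu * r x))" using f1_ftc(1)[OF sI tI st] f1s by simp
    have i1: "(\<lambda>x. f1 x * (1 / p x)) integrable_on {s..t}"
      using f_ftc(2)[OF sI tI st] set_lebesgue_integral_eq_integral(1) by blast
    have i2: "(\<lambda>x. f x * (q x - mu * r x)) integrable_on {s..t}"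
      using f1_ftc(2)[OF sI tI st] set_lebesgue_integral_eq_integral(1) by blast
    have mb: "\<bar>f x\<bar> \<le> Mx \<and> \<bar>f1 x\<bar> \<le> Mx" if "x \<in> {s..s+h}" for x
    proof -
      have "m x \<le> Mx" using ts(2) that unfolding Mx_def by blast
      then show ?thesis unfolding m_def using abs_ge_zero[of "f x"] abs_ge_zero[of "f1 x"] by linarith
    qed
    have b1: "\<bar>f t\<bar> \<le> Mx * integral {s..s+h} K"
      unfolding e1
    proof (rule int_bound[OF i1 Ki2])
      show "{s..t} \<subseteq> {s..s+h}" using t by auto
      show "\<forall>x\<in>{s..s+h}. 0 \<le> K x" using K0 by simp
      show "0 \<le> Mx" using Mx0 .
      show "\<forall>x\<in>{s..t}. \<bar>f1 x * (1 / p x)\<bar> \<le> Mx * K x"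
      proof
        fix x assume "x \<in> {s..t}"
        then have "x \<in> {s..s+h}" using t by auto
        then have "\<bar>f1 x\<bar> \<le> Mx" using mb by blast
        then have "\<bar>f1 x\<bar> * \<bar>1 / p x\<bar> \<le> Mx * K x"
          unfolding K_def using Mx0 by (intro mult_mono) auto
        then show "\<bar>f1 x * (1 / p x)\<bar> \<le> Mx * K x" by (simp add: abs_mult)
      qed
    qed
    have b2: "\<bar>f1 t\<bar> \<le> Mx * integral {s..s+h} K"
      unfolding e2
    proof (rule int_bound[OF i2 Ki2])
      show "{s..t} \<subseteq> {s..s+h}" using t by auto
      show "\<forall>x\<in>{s..s+h}. 0 \<le> K x" using K0 by simp
      show "0 \<le> Mx" using Mx0 .
      show "\<forall>x\<in>{s..t}. \<bar>f x * (q x - mu * r x)\<bar> \<le> Mx * K x"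
      proof
        fix x assume "x \<in> {s..t}"
        then have "x \<in> {s..s+h}" using t by auto
        then have "\<bar>f x\<bar> \<le> Mx" using mb by blast
        then have "\<bar>f x\<bar> * \<bar>q x - mu * r x\<bar> \<le> Mx * K x"
          unfolding K_def using Mx0 by (intro mult_mono) auto
        then show "\<bar>f x * (q x - mu * r x)\<bar> \<le> Mx * K x" by (simp add: abs_mult)
      qed
    qed
    show ?thesis unfolding m_def using b1 b2 by simp
  qed
  have "Mx \<le> 2 * Mx * integral {s..s+h} K" using bnd[OF ts(1)] unfolding Mx_def .
  also have "\<dots> \<le> 2 * Mx * (1/4)" using Hsmall Mx0 by (intro mult_left_mono) auto
  finally have "Mx = 0" using Mx0 by simp
  then have "\<forall>t\<in>{s..s+h}. m t \<le> 0" using ts(2) unfolding Mx_def by simp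
  then have "\<forall>t\<in>{s..s+h}. f t = 0 \<and> f1 t = 0" unfolding m_def by auto
  then show ?thesis using h0 shI by blast
qed

lemma uniq:
  assumes x0I: "x0 \<in> ivl a b" and f0: "f x0 = 0" and f10: "f1 x0 = 0" and x2I: "x2 \<in> ivl a b" and le: "x0 \<le> x2"
  shows "f x2 = 0"
proof -
  define T where "T = {x. x0 \<le> x \<and> x \<le> x2 \<and> (\<forall>t\<in>{x0..x}. f t = 0 \<and> f1 t = 0)}"
  have x0T: "x0 \<in> T" unfolding T_def using f0 f10 le by auto
  have bdd: "bdd_above T" unfolding T_def by (auto intro: bdd_aboveI[of _ x2])
  define s where "s = Sup T"
  have x0s: "x0 \<le> s" unfolding s_def using cSup_upper[OF x0T bdd] .
  have sx2: "s \<le> x2" unfolding s_def by (rule cSup_least) (use x0T T_def in auto)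
  have sI: "s \<in> ivl a b" using ivl_convex[OF x0I x2I x0s sx2] .
  have Z: "f t = 0 \<and> f1 t = 0" if "x0 \<le> t" "t < s" for t
  proof -
    have "t < Sup T" using that unfolding s_def by simp
    then obtain x where x: "x \<in> T" "t < x" using less_cSup_iff[OF _ bdd, of t] x0T by auto
    then show ?thesis using that unfolding T_def by auto
  qed
  have zs: "f s = 0 \<and> f1 s = 0"
  proof (cases "s = x0")
    case True then show ?thesis using f0 f10 by simp
  next
    case False
    then have lt: "x0 < s" using x0s by simp
    have ev: "eventually (\<lambda>t. x0 \<le> t \<and> t < s) (at_left s)"
      unfolding eventually_at_left[OF lt] by (intro exI[of _ x0]) (auto simp: lt)
    have "(f \<longlongrightarrow> f s) (at_left s)" using AC_loc_isCont[OF f_AC sI]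
      by (simp add: isCont_def filterlim_at_split)
    moreover have "(f \<longlongrightarrow> 0) (at_left s)"
    proof (rule tendsto_eventually)
      show "eventually (\<lambda>t. f t = 0) (at_left s)" using ev by (rule eventually_mono) (use Z in blast)
    qed
    ultimately have 1: "f s = 0" using tendsto_unique[OF trivial_limit_at_left_real] by blast
    have "(f1 \<longlongrightarrow> f1 s) (at_left s)" using AC_loc_isCont[OF f1_AC sI]
      by (simp add: isCont_def filterlim_at_split)
    moreover have "(f1 \<longlongrightarrow> 0) (at_left s)"
    proof (rule tendsto_eventually)
      show "eventually (\<lambda>t. f1 t = 0) (at_left s)" using ev by (rule eventually_mono) (use Z in blast)
    qed
    ultimately have 2: "f1 s = 0" using tendsto_unique[OF trivial_limit_at_left_real] by blast
    show ?thesis using 1 2 by simp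
  qed
  have "s = x2"
  proof (rule ccontr)
    assume "s \<noteq> x2"
    then have sx: "s < x2" using sx2 by simp
    obtain h where h: "h > 0" "s + h \<in> ivl a b" "\<forall>t\<in>{s..s+h}. f t = 0 \<and> f1 t = 0"
      using local_zero[OF sI] zs by blast
    define x' where "x' = min (s + h) x2"
    have "x' \<in> T"
    proof -
      have 1: "x0 \<le> x'" using x0s h sx unfolding x'_def by simp
      have 2: "x' \<le> x2" unfolding x'_def by simp
      have 3: "\<forall>t\<in>{x0..x'}. f t = 0 \<and> f1 t = 0"
      proof
        fix t assume t: "t \<in> {x0..x'}"
        show "f t = 0 \<and> f1 t = 0"
        proof (cases "t < s")
          case True then show ?thesis using Z t by auto
        next
          case False then show ?thesis using h(3) t unfolding x'_def by auto
        qed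
      qed
      show ?thesis unfolding T_def using 1 2 3 by blast
    qed
    then have "x' \<le> s" unfolding s_def using cSup_upper[OF _ bdd] by blast
    then show False using h sx unfolding x'_def by simp
  qed
  then show ?thesis using zs by simp
qed

lemma f1_zero:
  assumes sI: "s \<in> ivl a b" and tI: "t \<in> ivl a b" and st: "s < t" and fz: "\<forall>x\<in>{s..t}. f x = 0"
  shows "f1 s = 0"
proof -
  have const: "f1 x = f1 s" if x: "x \<in> {s..t}" for x
  proof -
    have xI: "x \<in> ivl a b" using ivl_convex[OF sI tI] x by auto
    have "f1 x - f1 s = integral {s..x} (\<lambda>y. f y * (q y - mu * r y))" using f1_ftc(1)[OF sI xI] x by simp
    also have "\<dots> = integral {s..x} (\<lambda>y. 0)"
    proof (rule integral_cong)
      fix y assume "y \<in> {s..x}"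
      then have "y \<in> {s..t}" using x by auto
      then have "f y = 0" using fz by blast
      then show "f y * (q y - mu * r y) = 0" by simp
    qed
    finally show ?thesis by simp
  qed
  have "0 = f t - f s" using fz st by simp
  also have "\<dots> = integral {s..t} (\<lambda>x. f1 x * (1 / p x))" using f_ftc(1)[OF sI tI] st by simp
  also have "\<dots> = integral {s..t} (\<lambda>x. f1 s * (1 / p x))"
  proof (rule integral_cong)
    fix y assume y: "y \<in> {s..t}"
    have "f1 y = f1 s" using const[OF y] .
    then show "f1 y * (1 / p y) = f1 s * (1 / p y)" by (rule arg_cong)
  qed
  also have "\<dots> = f1 s * integral {s..t} (\<lambda>x. 1 / p x)" by (rule integral_mult_right)
  finally have eq: "f1 s * integral {s..t} (\<lambda>x. 1 / p x) = 0" by simp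
  have "integral {s..t} (\<lambda>x. 1 / p x) > 0"
  proof (rule int_pos_AE[OF _ st])
    show "(\<lambda>x. 1 / p x) absolutely_integrable_on {s..t}" using L1p sI tI less_imp_le[OF st] unfolding L1_loc_def by blast
    show "AE x in lebesgue. x \<in> {s..t} \<longrightarrow> 0 < 1 / p x"
      using AE_ivl_sub[OF ppos sI tI] by (rule eventually_mono) auto
  qed
  then show ?thesis using eq by simp
qed

end

context SLB begin

lemma small_c2: "\<exists>c2. near c2 \<and> 3 * \<bar>mu - lam\<bar> * Iab c2 < 1"
proof -
  define e where "e = 1 / (3 * \<bar>mu - lam\<bar> + 1)"
  have e0: "e > 0" unfolding e_def by (simp add: add_nonneg_pos)
  have "eventually (\<lambda>x. Iab x < e) (left_end_filter a)" using order_tendstoD(2)[OF I_lim0 e0] .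
  then have "eventually (\<lambda>x. near x \<and> Iab x < e) (left_end_filter a)" using near_ev by eventually_elim auto
  then obtain x where x: "near x" "Iab x < e" using eventually_happens'[OF nontriv] by blast
  have "3 * \<bar>mu - lam\<bar> * Iab x \<le> 3 * \<bar>mu - lam\<bar> * e" using x(2) by (intro mult_left_mono) auto
  also have "\<dots> < 1"
  proof -
    have "3 * \<bar>mu - lam\<bar> * e = (3 * \<bar>mu - lam\<bar>) / (3 * \<bar>mu - lam\<bar> + 1)" unfolding e_def by simp
    also have "\<dots> < 1" by (simp add: add_nonneg_pos)
    finally show ?thesis .
  qed
  finally show ?thesis using x(1) by blast
qed

lemma part2:
  assumes nontriv_f: "\<exists>x\<in>ivl a b. f x \<noteq> 0"
  shows "\<exists>c'\<in>ivl a b. finite {x. a < ereal x \<and> x < c' \<and> f x = 0}"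
proof (rule ccontr)
  assume Inf: "\<not> ?thesis"
  have zex: "\<exists>z. a < ereal z \<and> z < c' \<and> f z = 0" if "c' \<in> ivl a b" for c'
  proof -
    have "infinite {x. a < ereal x \<and> x < c' \<and> f x = 0}" using Inf that by blast
    then have "{x. a < ereal x \<and> x < c' \<and> f x = 0} \<noteq> {}" by (metis finite.emptyI)
    then show ?thesis by blast
  qed
  obtain c2 where c2: "near c2" "3 * \<bar>mu - lam\<bar> * Iab c2 < 1" using small_c2 by blast
  have c2I: "c2 \<in> ivl a b" using near_ivl[OF c2(1)] .
  have c2c: "c2 \<le> c" using c2(1) c0(2) unfolding near_def by simp
  show False
  proof (cases "\<exists>z. near z \<and> (\<forall>t. a < ereal t \<and> t < z \<longrightarrow> f t = 0)")
    case True
    then obtain z where z: "near z" "\<forall>t. a < ereal t \<and> t < z \<longrightarrow> f t = 0" by blast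
    have az: "a < ereal z" using z(1) unfolding near_def by simp
    obtain s1 where s1: "a < ereal s1" "ereal s1 < ereal z" using ereal_dense2[OF az] by blast
    define t1 where "t1 = (s1 + z) / 2"
    have s1z: "s1 < z" using s1 by simp
    have st1: "s1 < t1" "t1 < z" unfolding t1_def using s1z by auto
    have ns1: "near s1" using s1 z(1) unfolding near_def by auto
    have nt1: "near t1" using near_between[OF ns1 z(1)] st1 by simp
    have s1I: "s1 \<in> ivl a b" and t1I: "t1 \<in> ivl a b" using near_ivl ns1 nt1 by auto
    have fz: "\<forall>x\<in>{s1..t1}. f x = 0"
    proof
      fix x assume x: "x \<in> {s1..t1}"
      have "a < ereal x" using s1(1) x by (auto intro: less_le_trans)
      moreover have "x < z" using x st1 by auto
      ultimately show "f x = 0" using z(2) by blast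
    qed
    have f1s1: "f1 s1 = 0" using f1_zero[OF s1I t1I st1(1) fz] .
    have fs1: "f s1 = 0" using fz st1 by auto
    have "\<forall>x\<in>ivl a b. f x = 0"
    proof
      fix x assume xI: "x \<in> ivl a b"
      show "f x = 0"
      proof (cases "s1 \<le> x")
        case True then show ?thesis using uniq[OF s1I fs1 f1s1 xI] by simp
      next
        case False
        then have "a < ereal x \<and> x < z" using xI s1z unfolding ivl_def by auto
        then show ?thesis using z(2) by blast
      qed
    qed
    then show False using nontriv_f by blast
  next
    case False
    then have nz: "\<exists>t. a < ereal t \<and> t < z \<and> f t \<noteq> 0" if "near z" for z using that by blast
    obtain y0 where y0: "a < ereal y0" "y0 < c2" "f y0 = 0" using zex[OF c2I] by blast
    have ny0: "near y0" using y0 c2(1) unfolding near_def by auto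
    obtain t0 where t0: "a < ereal t0" "t0 < y0" "f t0 \<noteq> 0" using nz[OF ny0] by blast
    have nt0: "near t0" using t0 ny0 unfolding near_def by auto
    have t0I: "t0 \<in> ivl a b" using near_ivl[OF nt0] .
    obtain z0 where z0: "a < ereal z0" "z0 < t0" "f z0 = 0" using zex[OF t0I] by blast
    have nz0: "near z0" using z0 nt0 unfolding near_def by auto
    have z0I: "z0 \<in> ivl a b" using near_ivl[OF nz0] .
    have y0I: "y0 \<in> ivl a b" using near_ivl[OF ny0] .
    define S1 where "S1 = {x \<in> {z0..t0}. f x = 0}"
    have S1c: "closed S1" unfolding S1_def by (rule continuous_closed_preimage_constant[OF fcont(1)[OF z0I t0I]]) simp
    have "z0 \<in> S1" using z0 unfolding S1_def by simp
    then have S1ne: "S1 \<noteq> {}" by blast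
    have S1b: "bdd_above S1" unfolding S1_def by (auto intro: bdd_aboveI[of _ t0])
    define x1 where "x1 = Sup S1"
    have x1S: "x1 \<in> S1" unfolding x1_def using closed_contains_Sup[OF S1ne S1b S1c] .
    have x1: "z0 \<le> x1" "x1 \<le> t0" "f x1 = 0" using x1S unfolding S1_def by auto
    have x1t0: "x1 < t0" using x1 t0(3) by (cases "x1 = t0") auto
    have after_x1: "f t \<noteq> 0" if "x1 < t" "t \<le> t0" for t
    proof
      assume "f t = 0"
      then have "t \<in> S1" unfolding S1_def using that x1 by auto
      then have "t \<le> x1" unfolding x1_def using cSup_upper[OF _ S1b] by blast
      then show False using that by simp
    qed
    define S2 where "S2 = {x \<in> {t0..y0}. f x = 0}"
    have S2c: "closed S2" unfolding S2_def by (rule continuous_closed_preimage_constant[OF fcont(1)[OF t0I y0I]]) simp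
    have "y0 \<in> S2" using y0 t0 unfolding S2_def by simp
    then have S2ne: "S2 \<noteq> {}" by blast
    have S2b: "bdd_below S2" unfolding S2_def by (auto intro: bdd_belowI[of _ t0])
    define y1 where "y1 = Inf S2"
    have y1S: "y1 \<in> S2" unfolding y1_def using closed_contains_Inf[OF S2ne S2b S2c] .
    have y1: "t0 \<le> y1" "y1 \<le> y0" "f y1 = 0" using y1S unfolding S2_def by auto
    have t0y1: "t0 < y1" using y1 t0(3) by (cases "y1 = t0") auto
    have before_y1: "f t \<noteq> 0" if "t0 \<le> t" "t < y1" for t
    proof
      assume "f t = 0"
      then have "t \<in> S2" unfolding S2_def using that y1 by auto
      then have "y1 \<le> t" unfolding y1_def using cInf_lower[OF _ S2b] by blast
      then show False using that by simp
    qed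
    have gap: "f t \<noteq> 0" if "x1 < t" "t < y1" for t
      using after_x1 before_y1 that by (cases "t \<le> t0") auto
    have nx1: "near x1" using near_between[OF nz0 nt0] x1 by simp
    have ny1: "near y1" using near_between[OF nt0 ny0] y1 by simp
    have x1y1: "x1 < y1" using x1t0 t0y1 by simp
    obtain y where y: "x1 \<le> y" "y < y1" "B y = 0" using B_zero[OF nx1 ny1 x1y1 x1(3) y1(3)] by blast
    have ny: "near y" using near_between[OF nx1 ny1] y by simp
    have y1c2: "y1 < c2" using y1(2) y0(2) by simp
    have zero: "\<forall>t\<in>{y..y1}. f t = 0" using est_zero[OF ny ny1 y(2) y(3) y1(3) y1c2 c2c c2(2)] .
    define tm where "tm = (y + y1) / 2"
    have "y < tm" "tm < y1" unfolding tm_def using y by auto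
    then have "f tm \<noteq> 0" using gap y by simp
    moreover have "f tm = 0" using zero \<open>y < tm\<close> \<open>tm < y1\<close> by auto
    ultimately show False by simp
  qed
qed

end

theorem mainTheorem4:
  fixes a b :: ereal and p q r u v u1 v1 :: "real \<Rightarrow> real" and lam c :: real
  assumes coeffs: "SL_coeffs a b p q r"
    and nonosc: "nonosc_at_a a b p q r lam"
    and u_sol: "is_sol a b p q r lam u u1"
    and v_sol: "is_sol a b p q r lam v v1"
    and u_principal: "principal_at_a a b p q r lam u"
    and v_nonprincipal: "lin_indep_on (ivl a b) u v"
    and wronskian: "\<forall>x\<in>ivl a b. v x * u1 x - v1 x * u x = 1"
    and c_in: "c \<in> ivl a b"
    and integrable: "set_integrable lebesgue {x. a < ereal x \<and> x < c} (\<lambda>x. u x * v x * r x)"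
  shows "(\<forall>z1 z2. ((\<lambda>x. phi a u v r lam z1 x / phi a u v r lam z2 x) \<longlongrightarrow> 1) (left_end_filter a))
         \<and> (\<forall>\<mu>::real. nonosc_at_a a b p q r \<mu>)"
proof -
  interpret SL a b p q r u v u1 v1 lam c
    using assms by unfold_locales
  have 1: "\<forall>z1 z2. ((\<lambda>x. phi a u v r lam z1 x / phi a u v r lam z2 x) \<longlongrightarrow> 1) (left_end_filter a)"
    using part1 by blast
  have 2: "nonosc_at_a a b p q r \<mu>" for \<mu> :: real
    unfolding nonosc_at_a_def
  proof (intro allI impI)
    fix f f1 :: "real \<Rightarrow> real"
    assume H: "is_sol a b p q r \<mu> f f1 \<and> (\<exists>x\<in>ivl a b. f x \<noteq> 0)"
    interpret SLB a b p q r u v u1 v1 lam c \<mu> f f1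
      using H by unfold_locales blast
    show "\<exists>c\<in>ivl a b. finite {x. a < ereal x \<and> x < c \<and> f x = 0}"
      using part2 H by blast
  qed
  show ?thesis using 1 2 by blast
qed


end
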